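(* Let $p$ be a prime and let $\mathcal{C}$ be a nontrivial finite Abelian $p$-group of length $N$. (1) If $\mathcal{C}\cong\mathbb{Z}_{p^N}$, then $\mathcal{C}$ has a finitary $\Pi_1$ Scott sentence within the class of Abelian $p$-groups of length $N$; and for any $X\subseteq\omega$ and any set $S$ that is $\Pi^0_1(X)$, there is a uniformly $X$-computable sequence $(\mathcal{C}_n)_{n\in\omega}$ of Abelian $p$-groups of length $N$ such that $\mathcal{C}_n\cong\mathcal{C}$ iff $n\in S$. (2) If $\mathcal{C}\not\cong\mathbb{Z}_{p^N}$, then $\mathcal{C}$ has a finitary $d$-c.e. Scott sentence; and for any $X\subseteq\omega$ and any set $S$ that is $d$-c.e. relative to $X$, there is a uniformly $X$-computable sequence $(\mathcal{C}_n)_{n\in\omega}$ of Abelian $p$-groups of length $N$ such that $\mathcal{C}_n\cong\mathcal{C}$ iff $n\in S$.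
   Context: For an Abelian $p$-group $G$: $G_0=G$, $G_{k+1}=pG_k$; the length of a finite $G$ is the least $k$ with $G_k=G_{k+1}$. A Scott sentence for $\mathcal{C}$ (within a class $K$) is a sentence whose countable models (in $K$) are exactly the copies of $\mathcal{C}$. A finitary $d$-c.e. sentence is the conjunction of a finitary existential sentence and a finitary universal sentence. A set is $d$-c.e. relative to $X$ if it is $S_1-S_2$ with $S_1,S_2$ c.e. in $X$. A sequence of structures is uniformly $X$-computable if their atomic diagrams are uniformly computable in $X$. *)

theory Defs
  imports "HOL-Algebra.Algebra"
begin

datatype rf = RZero | RSuc | RProj nat | RComp rf "rf list" | RPrec rf rf | RMu rf | ROrc

inductive rf_eval :: "nat set \<Rightarrow> rf \<Rightarrow> nat list \<Rightarrow> nat \<Rightarrow> bool" for Xo where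
  zero: "rf_eval Xo RZero xs 0"
| suc: "rf_eval Xo RSuc (x # xs) (Suc x)"
| proj: "i < length xs \<Longrightarrow> rf_eval Xo (RProj i) xs (xs ! i)"
| comp: "list_all2 (\<lambda>g y. rf_eval Xo g xs y) gs ys \<Longrightarrow> rf_eval Xo f ys z
          \<Longrightarrow> rf_eval Xo (RComp f gs) xs z"
| prec0: "rf_eval Xo g xs y \<Longrightarrow> rf_eval Xo (RPrec g h) (0 # xs) y"
| precS: "rf_eval Xo (RPrec g h) (n # xs) y \<Longrightarrow> rf_eval Xo h (n # y # xs) z
          \<Longrightarrow> rf_eval Xo (RPrec g h) (Suc n # xs) z"
| mu: "rf_eval Xo f (n # xs) 0 \<Longrightarrow> (\<forall>m<n. \<exists>k. rf_eval Xo f (m # xs) (Suc k))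
          \<Longrightarrow> rf_eval Xo (RMu f) xs n"
| orc: "rf_eval Xo ROrc (x # xs) (if x \<in> Xo then 1 else 0)"

definition ce_in :: "nat set \<Rightarrow> nat set \<Rightarrow> bool" where
  "ce_in Xo A \<longleftrightarrow> (\<exists>f. \<forall>n. n \<in> A \<longleftrightarrow> (\<exists>y. rf_eval Xo f [n] y))"

definition pi01_in :: "nat set \<Rightarrow> nat set \<Rightarrow> bool" where
  "pi01_in Xo A \<longleftrightarrow> ce_in Xo (- A)"

definition dce_in :: "nat set \<Rightarrow> nat set \<Rightarrow> bool" where
  "dce_in Xo A \<longleftrightarrow> (\<exists>S1 S2. ce_in Xo S1 \<and> ce_in Xo S2 \<and> A = S1 - S2)"

definition L_structure :: "('a, 'b) monoid_scheme \<Rightarrow> bool" where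
  "L_structure M \<longleftrightarrow> carrier M \<noteq> {} \<and> \<one>\<^bsub>M\<^esub> \<in> carrier M \<and>
     (\<forall>x\<in>carrier M. \<forall>y\<in>carrier M. x \<otimes>\<^bsub>M\<^esub> y \<in> carrier M)"

definition struct_iso :: "('a, 'c) monoid_scheme \<Rightarrow> ('b, 'd) monoid_scheme \<Rightarrow> bool" where
  "struct_iso M N \<longleftrightarrow> (\<exists>h. bij_betw h (carrier M) (carrier N) \<and> h \<one>\<^bsub>M\<^esub> = \<one>\<^bsub>N\<^esub> \<and>
     (\<forall>x\<in>carrier M. \<forall>y\<in>carrier M. h (x \<otimes>\<^bsub>M\<^esub> y) = h x \<otimes>\<^bsub>N\<^esub> h y))"

definition unif_computable_seq :: "nat set \<Rightarrow> (nat \<Rightarrow> nat monoid) \<Rightarrow> bool" where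
  "unif_computable_seq Xo Cs \<longleftrightarrow>
     (\<exists>f. \<forall>n a. rf_eval Xo f [n, a] (if a \<in> carrier (Cs n) then 1 else 0)) \<and>
     (\<exists>f. \<forall>n a. rf_eval Xo f [n, a] (if a = \<one>\<^bsub>Cs n\<^esub> then 1 else 0)) \<and>
     (\<exists>f. \<forall>n a b c. rf_eval Xo f [n, a, b, c]
        (if a \<in> carrier (Cs n) \<and> b \<in> carrier (Cs n) \<and> c \<in> carrier (Cs n) \<and>
            a \<otimes>\<^bsub>Cs n\<^esub> b = c then 1 else 0))"

datatype tm = TVar nat | TOne | TMul tm tm
datatype fm = FEq tm tm | FNot fm | FAnd fm fm | FOr fm fm | FEx nat fm | FAll nat fm

fun tm_vars :: "tm \<Rightarrow> nat set" where
  "tm_vars (TVar x) = {x}" | "tm_vars TOne = {}" | "tm_vars (TMul s t) = tm_vars s \<union> tm_vars t"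

fun fv :: "fm \<Rightarrow> nat set" where
  "fv (FEq s t) = tm_vars s \<union> tm_vars t"
| "fv (FNot \<phi>) = fv \<phi>"
| "fv (FAnd \<phi> \<psi>) = fv \<phi> \<union> fv \<psi>"
| "fv (FOr \<phi> \<psi>) = fv \<phi> \<union> fv \<psi>"
| "fv (FEx x \<phi>) = fv \<phi> - {x}"
| "fv (FAll x \<phi>) = fv \<phi> - {x}"

fun qfree :: "fm \<Rightarrow> bool" where
  "qfree (FEq s t) = True"
| "qfree (FNot \<phi>) = qfree \<phi>"
| "qfree (FAnd \<phi> \<psi>) = (qfree \<phi> \<and> qfree \<psi>)"
| "qfree (FOr \<phi> \<psi>) = (qfree \<phi> \<and> qfree \<psi>)"
| "qfree (FEx x \<phi>) = False"
| "qfree (FAll x \<phi>) = False"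

fun existential :: "fm \<Rightarrow> bool" where
  "existential (FEx x \<phi>) = existential \<phi>"
| "existential \<phi> = qfree \<phi>"

fun universal :: "fm \<Rightarrow> bool" where
  "universal (FAll x \<phi>) = universal \<phi>"
| "universal \<phi> = qfree \<phi>"

definition sentence :: "fm \<Rightarrow> bool" where
  "sentence \<phi> \<longleftrightarrow> fv \<phi> = {}"

definition dce_sentence :: "fm \<Rightarrow> bool" where
  "dce_sentence \<phi> \<longleftrightarrow> (\<exists>\<alpha> \<beta>. sentence \<alpha> \<and> sentence \<beta> \<and> existential \<alpha> \<and> universal \<beta> \<and>
      \<phi> = FAnd \<alpha> \<beta>)"

fun tm_eval :: "('a, 'b) monoid_scheme \<Rightarrow> (nat \<Rightarrow> 'a) \<Rightarrow> tm \<Rightarrow> 'a" where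
  "tm_eval M e (TVar x) = e x"
| "tm_eval M e TOne = \<one>\<^bsub>M\<^esub>"
| "tm_eval M e (TMul s t) = tm_eval M e s \<otimes>\<^bsub>M\<^esub> tm_eval M e t"

fun sat :: "('a, 'b) monoid_scheme \<Rightarrow> (nat \<Rightarrow> 'a) \<Rightarrow> fm \<Rightarrow> bool" where
  "sat M e (FEq s t) = (tm_eval M e s = tm_eval M e t)"
| "sat M e (FNot \<phi>) = (\<not> sat M e \<phi>)"
| "sat M e (FAnd \<phi> \<psi>) = (sat M e \<phi> \<and> sat M e \<psi>)"
| "sat M e (FOr \<phi> \<psi>) = (sat M e \<phi> \<or> sat M e \<psi>)"
| "sat M e (FEx x \<phi>) = (\<exists>a\<in>carrier M. sat M (e(x := a)) \<phi>)"
| "sat M e (FAll x \<phi>) = (\<forall>a\<in>carrier M. sat M (e(x := a)) \<phi>)"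

definition models :: "('a, 'b) monoid_scheme \<Rightarrow> fm \<Rightarrow> bool" where
  "models M \<phi> \<longleftrightarrow> sat M (\<lambda>_. \<one>\<^bsub>M\<^esub>) \<phi>"

text \<open>Scott sentence for C within class K: its countable models in K (every countable
  structure is isomorphic to one with domain contained in nat) are exactly the copies of C.\<close>
definition scott_sentence_within ::
    "(nat monoid \<Rightarrow> bool) \<Rightarrow> ('a, 'b) monoid_scheme \<Rightarrow> fm \<Rightarrow> bool" where
  "scott_sentence_within K C \<phi> \<longleftrightarrow> sentence \<phi> \<and>
     (\<forall>M :: nat monoid. L_structure M \<and> K M \<longrightarrow> (models M \<phi> \<longleftrightarrow> struct_iso M C))"

definition p_layer :: "nat \<Rightarrow> ('a, 'b) monoid_scheme \<Rightarrow> nat \<Rightarrow> 'a set" where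
  "p_layer p G k = (\<lambda>x. x [^]\<^bsub>G\<^esub> (p ^ k)) ` carrier G"

definition abelian_p_group :: "nat \<Rightarrow> ('a, 'b) monoid_scheme \<Rightarrow> bool" where
  "abelian_p_group p G \<longleftrightarrow> comm_group G \<and>
     (\<forall>x\<in>carrier G. \<exists>n. x [^]\<^bsub>G\<^esub> (p ^ n) = \<one>\<^bsub>G\<^esub>)"

definition has_length :: "nat \<Rightarrow> ('a, 'b) monoid_scheme \<Rightarrow> nat \<Rightarrow> bool" where
  "has_length p G N \<longleftrightarrow> p_layer p G N = p_layer p G (Suc N) \<and>
     (\<forall>k<N. p_layer p G k \<noteq> p_layer p G (Suc k))"

end

theory Submission
  imports Defs
begin

definition cb :: "nat set \<Rightarrow> nat \<Rightarrow> rf \<Rightarrow> (nat list \<Rightarrow> nat) \<Rightarrow> bool" where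
  "cb Xo k T F \<longleftrightarrow> (\<forall>xs. length xs = k \<longrightarrow> rf_eval Xo T xs (F xs))"

definition cm :: "nat set \<Rightarrow> nat \<Rightarrow> (nat list \<Rightarrow> nat) \<Rightarrow> bool" where
  "cm Xo k F \<longleftrightarrow> (\<exists>T. cb Xo k T F)"

lemma cm_cong: "cm Xo k F \<Longrightarrow> (\<And>xs. length xs = k \<Longrightarrow> F xs = G xs) \<Longrightarrow> cm Xo k G"
  unfolding cm_def cb_def by metis

lemma cm_zero: "cm Xo k (\<lambda>_. 0)"
  unfolding cm_def cb_def by (auto intro: rf_eval.zero)

lemma cm_proj: "i < k \<Longrightarrow> cm Xo k (\<lambda>xs. xs ! i)"
  unfolding cm_def cb_def by (auto intro: rf_eval.proj)

lemma cb_comp: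
  assumes "cb Xo (length Gs) T F" "list_all2 (\<lambda>G H. cb Xo k G H) Gs Hs"
  shows "cb Xo k (RComp T Gs) (\<lambda>xs. F (map (\<lambda>H. H xs) Hs))"
  unfolding cb_def
proof (intro allI impI)
  fix xs :: "nat list" assume l: "length xs = k"
  have la: "length Gs = length Hs" using assms(2) list_all2_lengthD by blast
  have "list_all2 (\<lambda>g y. rf_eval Xo g xs y) Gs (map (\<lambda>H. H xs) Hs)"
    using assms(2) l unfolding list_all2_conv_all_nth cb_def by auto
  moreover have "rf_eval Xo T (map (\<lambda>H. H xs) Hs) (F (map (\<lambda>H. H xs) Hs))"
    using assms(1) la unfolding cb_def by auto
  ultimately show "rf_eval Xo (RComp T Gs) xs (F (map (\<lambda>H. H xs) Hs))"
    by (rule rf_eval.comp)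
qed

lemma cm_comp:
  assumes "cm Xo (length Hs) F" "\<forall>H\<in>set Hs. cm Xo k H"
  shows "cm Xo k (\<lambda>xs. F (map (\<lambda>H. H xs) Hs))"
proof -
  obtain T where T: "cb Xo (length Hs) T F" using assms(1) unfolding cm_def by auto
  have "\<forall>H\<in>set Hs. \<exists>G. cb Xo k G H" using assms(2) unfolding cm_def by auto
  then obtain g where g: "\<forall>H\<in>set Hs. cb Xo k (g H) H" by metis
  have "list_all2 (\<lambda>G H. cb Xo k G H) (map g Hs) Hs"
    using g by (auto simp: list_all2_conv_all_nth)
  then show ?thesis using cb_comp[of Xo "map g Hs" T F k Hs] T unfolding cm_def by auto
qed

lemma cm_comp1:
  assumes "cm Xo 1 F" "cm Xo k H1"
  shows "cm Xo k (\<lambda>xs. F [H1 xs])"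
  using cm_comp[of Xo "[H1]" F k] assms by simp

lemma cm_comp2:
  assumes "cm Xo 2 F" "cm Xo k H1" "cm Xo k H2"
  shows "cm Xo k (\<lambda>xs. F [H1 xs, H2 xs])"
  using cm_comp[of Xo "[H1,H2]" F k] assms by (simp add: numeral_2_eq_2)

lemma cm_suc0: "cm Xo 1 (\<lambda>xs. Suc (xs ! 0))"
  unfolding cm_def cb_def
proof (intro exI allI impI)
  fix xs :: "nat list" assume "length xs = 1"
  then obtain x where "xs = [x]" by (cases xs) auto
  then show "rf_eval Xo RSuc xs (Suc (xs ! 0))" by (auto intro: rf_eval.suc)
qed

lemma cm_orc0: "cm Xo 1 (\<lambda>xs. if xs ! 0 \<in> Xo then 1 else 0)"
  unfolding cm_def cb_def
proof (intro exI allI impI)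
  fix xs :: "nat list" assume "length xs = 1"
  then obtain x where "xs = [x]" by (cases xs) auto
  then show "rf_eval Xo ROrc xs (if xs ! 0 \<in> Xo then 1 else 0)" using rf_eval.orc[of Xo x "[]"] by simp
qed

lemma cm_suc: "cm Xo k F \<Longrightarrow> cm Xo k (\<lambda>xs. Suc (F xs))"
  using cm_comp1[OF cm_suc0] by simp

lemma cm_orc: "cm Xo k F \<Longrightarrow> cm Xo k (\<lambda>xs. if F xs \<in> Xo then 1 else 0)"
  using cm_comp1[OF cm_orc0] by simp

lemma cm_const: "cm Xo k (\<lambda>_. c)"
  by (induction c) (auto intro: cm_zero cm_suc[where F="\<lambda>_. _", simplified])

lemma cm_prec:
  assumes "cm Xo k Fg" "cm Xo (Suc (Suc k)) Fh"
  shows "cm Xo (Suc k) (\<lambda>xs. rec_nat (Fg (tl xs)) (\<lambda>n r. Fh (n # r # tl xs)) (hd xs))"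
proof -
  obtain G H where G: "cb Xo k G Fg" and H: "cb Xo (Suc (Suc k)) H Fh"
    using assms unfolding cm_def by auto
  have P: "rf_eval Xo (RPrec G H) (n # ys) (rec_nat (Fg ys) (\<lambda>n r. Fh (n # r # ys)) n)"
    if "length ys = k" for n ys
  proof (induction n)
    case 0 then show ?case using G that unfolding cb_def by (auto intro: rf_eval.prec0)
  next
    case (Suc n) then show ?case using H that unfolding cb_def by (auto intro: rf_eval.precS)
  qed
  then have "cb Xo (Suc k) (RPrec G H) (\<lambda>xs. rec_nat (Fg (tl xs)) (\<lambda>n r. Fh (n # r # tl xs)) (hd xs))"
    unfolding cb_def
  proof (intro allI impI)
    fix xs :: "nat list" assume "length xs = Suc k"
    then obtain n ys where "xs = n # ys" "length ys = k" by (cases xs) auto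
    then show "rf_eval Xo (RPrec G H) xs (rec_nat (Fg (tl xs)) (\<lambda>n r. Fh (n # r # tl xs)) (hd xs))"
      using P by simp
  qed
  then show ?thesis unfolding cm_def by auto
qed

lemma cm_prec1:
  assumes "cm Xo 0 Fg" "cm Xo 2 Fh"
  shows "cm Xo 1 (\<lambda>xs. rec_nat (Fg []) (\<lambda>n r. Fh [n, r]) (xs!0))"
proof -
  have "cm Xo (Suc 0) (\<lambda>xs. rec_nat (Fg (tl xs)) (\<lambda>n r. Fh (n # r # tl xs)) (hd xs))"
    using cm_prec[of Xo 0 Fg Fh] assms by (simp add: numeral_2_eq_2)
  then show ?thesis unfolding One_nat_def
    by (rule cm_cong) (auto simp: length_Suc_conv)
qed

lemma cm_prec2:
  assumes "cm Xo 1 Fg" "cm Xo 3 Fh"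
  shows "cm Xo 2 (\<lambda>xs. rec_nat (Fg [xs!1]) (\<lambda>n r. Fh [n, r, xs!1]) (xs!0))"
proof -
  have "cm Xo (Suc 1) (\<lambda>xs. rec_nat (Fg (tl xs)) (\<lambda>n r. Fh (n # r # tl xs)) (hd xs))"
    using cm_prec[of Xo 1 Fg Fh] assms by (simp add: numeral_3_eq_3)
  then show ?thesis unfolding numeral_2_eq_2 One_nat_def
    by (rule cm_cong) (auto simp: length_Suc_conv)
qed

lemma rec_add: "rec_nat b (\<lambda>n r. Suc r) a = a + (b::nat)"
  by (induction a) auto
lemma rec_mul: "rec_nat 0 (\<lambda>n r. r + b) a = a * (b::nat)"
  by (induction a) auto
lemma rec_pred: "rec_nat 0 (\<lambda>n r. n) a = a - (1::nat)"
  by (induction a) auto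
lemma rec_sub: "rec_nat b (\<lambda>n r. r - Suc 0) a = b - (a::nat)"
  by (induction a) auto
lemma rec_sg: "rec_nat 0 (\<lambda>n r. Suc 0) a = (if a = 0 then 0 else Suc 0)"
  by (induction a) auto

lemma cm_add0: "cm Xo 2 (\<lambda>l. l!0 + l!1)"
proof -
  have "cm Xo 2 (\<lambda>xs. rec_nat ([xs!1] ! 0) (\<lambda>n r. Suc ([n, r, xs!1] ! 1)) (xs!0))"
    by (rule cm_prec2[OF cm_proj cm_suc[OF cm_proj]]) auto
  then show ?thesis by (rule cm_cong) (simp add: rec_add)
qed

lemma cm_add: "cm Xo k F \<Longrightarrow> cm Xo k G \<Longrightarrow> cm Xo k (\<lambda>xs. F xs + G xs)"
  using cm_comp2[OF cm_add0] by simp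

lemma cm_mul0: "cm Xo 2 (\<lambda>l. l!0 * l!1)"
proof -
  have "cm Xo 2 (\<lambda>xs. rec_nat ((\<lambda>_. 0) [xs!1]) (\<lambda>n r. [n, r, xs!1] ! 1 + [n, r, xs!1] ! 2) (xs!0))"
    by (rule cm_prec2[OF cm_zero cm_add[OF cm_proj cm_proj]]) auto
  then show ?thesis by (rule cm_cong) (simp add: rec_mul)
qed

lemma cm_mul: "cm Xo k F \<Longrightarrow> cm Xo k G \<Longrightarrow> cm Xo k (\<lambda>xs. F xs * G xs)"
  using cm_comp2[OF cm_mul0] by simp

lemma cm_pred0: "cm Xo 1 (\<lambda>l. l!0 - 1)"
proof -
  have "cm Xo 1 (\<lambda>xs. rec_nat ((\<lambda>_. 0) []) (\<lambda>n r. [n, r] ! 0) (xs!0))"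
    by (rule cm_prec1[OF cm_zero cm_proj]) auto
  then show ?thesis by (rule cm_cong) (simp add: rec_pred)
qed

lemma cm_pred: "cm Xo k F \<Longrightarrow> cm Xo k (\<lambda>xs. F xs - 1)"
  using cm_comp1[OF cm_pred0] by simp

lemma cm_sub0: "cm Xo 2 (\<lambda>l. l!1 - l!0)"
proof -
  have "cm Xo 2 (\<lambda>xs. rec_nat ([xs!1] ! 0) (\<lambda>n r. [n, r, xs!1] ! 1 - 1) (xs!0))"
    by (rule cm_prec2[OF cm_proj cm_pred[OF cm_proj]]) auto
  then show ?thesis by (rule cm_cong) (simp add: rec_sub)
qed

lemma cm_sub: "cm Xo k F \<Longrightarrow> cm Xo k G \<Longrightarrow> cm Xo k (\<lambda>xs. F xs - G xs)"
  using cm_comp2[OF cm_sub0, where k=k and ?H1.0=G and ?H2.0=F] by simp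

lemma cm_sg0: "cm Xo 1 (\<lambda>l. if l!0 = 0 then 0 else 1)"
proof -
  have "cm Xo 1 (\<lambda>xs. rec_nat ((\<lambda>_. 0) []) (\<lambda>n r. (\<lambda>_. 1) [n, r]) (xs!0))"
    by (rule cm_prec1[OF cm_zero cm_const])
  then show ?thesis by (rule cm_cong) (simp add: rec_sg)
qed

definition cp :: "nat set \<Rightarrow> nat \<Rightarrow> (nat list \<Rightarrow> bool) \<Rightarrow> bool" where
  "cp Xo k P \<longleftrightarrow> cm Xo k (\<lambda>xs. if P xs then 1 else 0)"

lemma cp_nz: "cm Xo k F \<Longrightarrow> cp Xo k (\<lambda>xs. F xs \<noteq> 0)"
proof -
  assume "cm Xo k F"
  then have "cm Xo k (\<lambda>xs. if F xs = 0 then 0 else 1)" using cm_comp1[OF cm_sg0, where k=k and ?H1.0=F] by simp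
  then show ?thesis unfolding cp_def by (rule cm_cong) auto
qed

lemma cp_not: "cp Xo k P \<Longrightarrow> cp Xo k (\<lambda>xs. \<not> P xs)"
  unfolding cp_def by (rule cm_cong[OF cm_sub[OF cm_const]]) auto

lemma cp_and: "cp Xo k P \<Longrightarrow> cp Xo k Q \<Longrightarrow> cp Xo k (\<lambda>xs. P xs \<and> Q xs)"
proof -
  assume "cp Xo k P" "cp Xo k Q"
  then have "cm Xo k (\<lambda>xs. (if P xs then 1 else 0) * (if Q xs then 1 else 0))"
    unfolding cp_def by (rule cm_mul)
  then show ?thesis unfolding cp_def by (rule cm_cong) auto
qed

lemma cp_or: "cp Xo k P \<Longrightarrow> cp Xo k Q \<Longrightarrow> cp Xo k (\<lambda>xs. P xs \<or> Q xs)"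
proof -
  assume "cp Xo k P" "cp Xo k Q"
  then have "cp Xo k (\<lambda>xs. \<not> (\<not> P xs \<and> \<not> Q xs))" by (intro cp_not cp_and)
  then show ?thesis by simp
qed

lemma cp_eq: "cm Xo k F \<Longrightarrow> cm Xo k G \<Longrightarrow> cp Xo k (\<lambda>xs. F xs = G xs)"
proof -
  assume "cm Xo k F" "cm Xo k G"
  then have "cp Xo k (\<lambda>xs. \<not> ((F xs - G xs) + (G xs - F xs) \<noteq> 0))"
    by (intro cp_not cp_nz cm_add cm_sub)
  then show ?thesis unfolding cp_def by (rule cm_cong) auto
qed

lemma cp_less: "cm Xo k F \<Longrightarrow> cm Xo k G \<Longrightarrow> cp Xo k (\<lambda>xs. F xs < G xs)"
proof -
  assume "cm Xo k F" "cm Xo k G"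
  then have "cp Xo k (\<lambda>xs. G xs - F xs \<noteq> 0)" by (intro cp_nz cm_sub)
  then show ?thesis by (simp add: cp_def not_le)
qed

lemma cp_const: "cp Xo k (\<lambda>_. b)"
  unfolding cp_def by (rule cm_const)

lemma cm_if: "cp Xo k P \<Longrightarrow> cm Xo k F \<Longrightarrow> cm Xo k G \<Longrightarrow> cm Xo k (\<lambda>xs. if P xs then F xs else G xs)"
proof -
  assume a: "cp Xo k P" "cm Xo k F" "cm Xo k G"
  have "cm Xo k (\<lambda>xs. (if P xs then 1 else 0) * F xs + (1 - (if P xs then 1 else 0)) * G xs)"
    using a unfolding cp_def by (intro cm_add cm_mul cm_sub cm_const)
  then show ?thesis by (rule cm_cong) auto
qed

lemma cm_cp: "cp Xo k P \<Longrightarrow> cm Xo k (\<lambda>xs. if P xs then 1 else 0)"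
  unfolding cp_def .

lemma cp_cong: "cp Xo k P \<Longrightarrow> (\<And>xs. length xs = k \<Longrightarrow> P xs = Q xs) \<Longrightarrow> cp Xo k Q"
  unfolding cp_def by (erule cm_cong) auto


fun mst :: "(nat \<Rightarrow> nat option) \<Rightarrow> nat \<Rightarrow> nat" where
  "mst F 0 = 0"
| "mst F (Suc i) = (if mst F i \<noteq> 0 then mst F i else
     (case F i of None \<Rightarrow> 1 | Some 0 \<Rightarrow> i + 2 | Some (Suc _) \<Rightarrow> 0))"

primrec ev :: "nat set \<Rightarrow> rf \<Rightarrow> nat \<Rightarrow> nat list \<Rightarrow> nat option" where
  "ev Xo RZero = (\<lambda>s xs. Some 0)"
| "ev Xo RSuc = (\<lambda>s xs. case xs of [] \<Rightarrow> None | x # _ \<Rightarrow> Some (Suc x))"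
| "ev Xo (RProj i) = (\<lambda>s xs. if i < length xs then Some (xs ! i) else None)"
| "ev Xo (RComp f gs) = (\<lambda>s xs. let rs = map (\<lambda>e. e s xs) (map (ev Xo) gs) in
      if None \<in> set rs then None else ev Xo f s (map the rs))"
| "ev Xo (RPrec g h) = (\<lambda>s xs. case xs of [] \<Rightarrow> None | n # ys \<Rightarrow>
      rec_nat (ev Xo g s ys) (\<lambda>i acc. case acc of None \<Rightarrow> None | Some v \<Rightarrow> ev Xo h s (i # v # ys)) n)"
| "ev Xo (RMu f) = (\<lambda>s xs. let st = mst (\<lambda>m. ev Xo f s (m # xs)) (Suc s) in
      if 2 \<le> st then Some (st - 2) else None)"
| "ev Xo ROrc = (\<lambda>s xs. case xs of [] \<Rightarrow> None | x # _ \<Rightarrow> Some (if x \<in> Xo then 1 else 0))"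


lemma ev_RComp: "ev Xo (RComp f gs) s xs = (let rs = map (\<lambda>g. ev Xo g s xs) gs in
      if None \<in> set rs then None else ev Xo f s (map the rs))"
  by (simp add: map_map o_def)

declare ev.simps(4)[simp del]

lemma mst_zero: "mst F i = 0 \<Longrightarrow> m < i \<Longrightarrow> \<exists>k. F m = Some (Suc k)"
proof (induction i)
  case 0 then show ?case by simp
next
  case (Suc i)
  show ?case
  proof (cases "mst F i = 0")
    case True
    then show ?thesis using Suc by (cases "F i") (auto split: nat.splits if_splits simp: less_Suc_eq)
  next
    case False then show ?thesis using Suc by simp
  qed
qed

lemma mst_zeroI: "(\<forall>m<i. \<exists>k. F m = Some (Suc k)) \<Longrightarrow> mst F i = 0"
  by (induction i) auto

lemma mst_found: "mst F i = j + 2 \<Longrightarrow> j < i \<and> F j = Some 0 \<and> (\<forall>m<j. \<exists>k. F m = Some (Suc k))"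
proof (induction i)
  case 0 then show ?case by simp
next
  case (Suc i)
  show ?case
  proof (cases "mst F i = 0")
    case True
    then have "(case F i of None \<Rightarrow> 1 | Some 0 \<Rightarrow> i + 2 | Some (Suc _) \<Rightarrow> 0) = j + 2" using Suc.prems by simp
    then have "F i = Some 0 \<and> j = i" by (auto split: option.splits nat.splits)
    then show ?thesis using mst_zero[OF True] by auto
  next
    case False then show ?thesis using Suc by simp
  qed
qed

lemma mst_foundI: "j < i \<Longrightarrow> F j = Some 0 \<Longrightarrow> (\<forall>m<j. \<exists>k. F m = Some (Suc k)) \<Longrightarrow> mst F i = j + 2"
proof (induction i)
  case 0 then show ?case by simp
next
  case (Suc i)
  show ?case
  proof (cases "j < i")
    case True then show ?thesis using Suc by simp
  next
    case False
    then have "j = i" using Suc by simp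
    then show ?thesis using mst_zeroI[of j F] Suc by simp
  qed
qed

lemma ev_sound: "ev Xo f s xs = Some y \<Longrightarrow> rf_eval Xo f xs y"
proof (induction f arbitrary: xs y)
  case RZero then show ?case by (auto intro: rf_eval.zero)
next
  case RSuc then show ?case by (auto split: list.splits intro: rf_eval.suc)
next
  case (RProj i) then show ?case by (auto split: if_splits intro: rf_eval.proj)
next
  case (RComp f gs)
  let ?rs = "map (\<lambda>g. ev Xo g s xs) gs"
  have nn: "None \<notin> set ?rs" and fe: "ev Xo f s (map the ?rs) = Some y"
    using RComp.prems by (auto simp: Let_def ev_RComp split: if_splits)
  have "list_all2 (\<lambda>g y. rf_eval Xo g xs y) gs (map the ?rs)"
    unfolding list_all2_conv_all_nth
  proof (intro conjI allI impI)
    fix i assume i: "i < length gs"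
    then have "ev Xo (gs ! i) s xs \<noteq> None" using nn by (metis length_map nth_map nth_mem)
    then have "ev Xo (gs ! i) s xs = Some (map the ?rs ! i)" using i by auto
    then show "rf_eval Xo (gs ! i) xs (map the ?rs ! i)" using RComp.IH(2) i by auto
  qed simp
  then show ?case using RComp.IH(1)[OF fe] by (rule rf_eval.comp)
next
  case (RPrec g h)
  then obtain n ys where xs: "xs = n # ys" by (cases xs) auto
  have "rec_nat (ev Xo g s ys) (\<lambda>i acc. case acc of None \<Rightarrow> None | Some v \<Rightarrow> ev Xo h s (i # v # ys)) n = Some y
    \<Longrightarrow> rf_eval Xo (RPrec g h) (n # ys) y" for y
  proof (induction n arbitrary: y)
    case 0 then show ?case using RPrec.IH(1) by (auto intro: rf_eval.prec0)
  next
    case (Suc n)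
    then obtain v where v: "rec_nat (ev Xo g s ys) (\<lambda>i acc. case acc of None \<Rightarrow> None | Some v \<Rightarrow> ev Xo h s (i # v # ys)) n = Some v"
      and hv: "ev Xo h s (n # v # ys) = Some y" by (auto split: option.splits)
    show ?case using Suc.IH[OF v] RPrec.IH(2)[OF hv] by (rule rf_eval.precS)
  qed
  then show ?case using RPrec.prems xs by simp
next
  case (RMu f)
  let ?F = "\<lambda>m. ev Xo f s (m # xs)"
  have "mst ?F (Suc s) = y + 2" using RMu.prems by (auto simp: Let_def split: if_splits)
  from mst_found[OF this] have "?F y = Some 0" "\<forall>m<y. \<exists>k. ?F m = Some (Suc k)" by auto
  then show ?case using RMu.IH by (blast intro: rf_eval.mu)
next
  case ROrc then show ?case by (auto split: list.splits intro: rf_eval.orc)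
qed

lemma ev_mono: "ev Xo f s xs = Some y \<Longrightarrow> s \<le> s' \<Longrightarrow> ev Xo f s' xs = Some y"
proof (induction f arbitrary: xs y)
  case (RComp f gs)
  let ?rs = "map (\<lambda>g. ev Xo g s xs) gs"
  let ?rs' = "map (\<lambda>g. ev Xo g s' xs) gs"
  have nn: "None \<notin> set ?rs" and fe: "ev Xo f s (map the ?rs) = Some y"
    using RComp.prems by (auto simp: Let_def ev_RComp split: if_splits)
  have eq: "?rs' = ?rs"
  proof (rule nth_equalityI)
    fix i assume "i < length ?rs'"
    then have i: "i < length gs" by simp
    then have "ev Xo (gs ! i) s xs \<noteq> None" using nn by (metis length_map nth_map nth_mem)
    then obtain v where "ev Xo (gs ! i) s xs = Some v" by auto
    then show "?rs' ! i = ?rs ! i" using RComp.IH(2) i RComp.prems(2) by auto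
  qed simp
  show ?case using RComp.IH(1)[OF fe RComp.prems(2)] nn eq unfolding ev_RComp Let_def by (simp only: eq) simp
next
  case (RPrec g h)
  then obtain n ys where xs: "xs = n # ys" by (cases xs) auto
  have "rec_nat (ev Xo g s ys) (\<lambda>i acc. case acc of None \<Rightarrow> None | Some v \<Rightarrow> ev Xo h s (i # v # ys)) n = Some y
    \<Longrightarrow> rec_nat (ev Xo g s' ys) (\<lambda>i acc. case acc of None \<Rightarrow> None | Some v \<Rightarrow> ev Xo h s' (i # v # ys)) n = Some y" for y
  proof (induction n arbitrary: y)
    case 0 then show ?case using RPrec.IH(1) RPrec.prems(2) by auto
  next
    case (Suc n)
    then obtain v where v: "rec_nat (ev Xo g s ys) (\<lambda>i acc. case acc of None \<Rightarrow> None | Some v \<Rightarrow> ev Xo h s (i # v # ys)) n = Some v"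
      and hv: "ev Xo h s (n # v # ys) = Some y" by (auto split: option.splits)
    show ?case using Suc.IH[OF v] RPrec.IH(2)[OF hv RPrec.prems(2)] by simp
  qed
  then show ?case using RPrec.prems xs by simp
next
  case (RMu f)
  let ?F = "\<lambda>m. ev Xo f s (m # xs)"
  let ?F' = "\<lambda>m. ev Xo f s' (m # xs)"
  have "mst ?F (Suc s) = y + 2" using RMu.prems by (auto simp: Let_def split: if_splits)
  from mst_found[OF this] have a: "y < Suc s" "?F y = Some 0" "\<forall>m<y. \<exists>k. ?F m = Some (Suc k)" by auto
  have "mst ?F' (Suc s') = y + 2"
  proof (rule mst_foundI)
    show "y < Suc s'" using a(1) RMu.prems(2) by simp
    show "?F' y = Some 0" using a(2) RMu.IH RMu.prems(2) by blast
    show "\<forall>m<y. \<exists>k. ?F' m = Some (Suc k)" using a(3) RMu.IH RMu.prems(2) by blast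
  qed
  then show ?case by (simp add: Let_def)
qed auto
lemma bound_list:
  assumes "list_all2 (\<lambda>g y. \<exists>s. ev Xo g s xs = Some y) gs ys"
  shows "\<exists>S. \<forall>s\<ge>S. map (\<lambda>g. ev Xo g s xs) gs = map Some ys"
  using assms
proof (induction rule: list_all2_induct)
  case Nil then show ?case by simp
next
  case (Cons g gs y ys)
  then obtain s0 S where "ev Xo g s0 xs = Some y" "\<forall>s\<ge>S. map (\<lambda>g. ev Xo g s xs) gs = map Some ys" by auto
  then have "\<forall>s\<ge>max s0 S. map (\<lambda>g. ev Xo g s xs) (g # gs) = map Some (y # ys)"
    using ev_mono[of Xo g s0 xs y] by simp
  then show ?case by blast
qed

lemma bound_mu:
  assumes "\<forall>m<n. \<exists>k s. ev Xo f s (m # xs) = Some (Suc k)"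
  shows "\<exists>S. \<forall>s\<ge>S. \<forall>m<n. \<exists>k. ev Xo f s (m # xs) = Some (Suc k)"
  using assms
proof (induction n)
  case 0 then show ?case by simp
next
  case (Suc n)
  then obtain S where S: "\<forall>s\<ge>S. \<forall>m<n. \<exists>k. ev Xo f s (m # xs) = Some (Suc k)" by auto
  obtain k s0 where "ev Xo f s0 (n # xs) = Some (Suc k)" using Suc.prems by auto
  then have "\<forall>s\<ge>max S s0. \<forall>m<Suc n. \<exists>k. ev Xo f s (m # xs) = Some (Suc k)"
  proof (intro allI impI)
    fix s m assume a: "max S s0 \<le> s" "m < Suc n"
    show "\<exists>k. ev Xo f s (m # xs) = Some (Suc k)"
    proof (cases "m < n")
      case True then show ?thesis using S a by simp
    next
      case False then have "m = n" using a by simp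
      then show ?thesis using ev_mono[OF \<open>ev Xo f s0 (n # xs) = Some (Suc k)\<close>] a by auto
    qed
  qed
  then show ?case by blast
qed

lemma ev_complete: "rf_eval Xo f xs y \<Longrightarrow> \<exists>s. ev Xo f s xs = Some y"
proof (induction rule: rf_eval.induct)
  case (comp xs gs ys f z)
  have "list_all2 (\<lambda>g y. \<exists>s. ev Xo g s xs = Some y) gs ys"
    using comp.IH(1) by (rule list_all2_mono) auto
  then obtain S where S: "\<forall>s\<ge>S. map (\<lambda>g. ev Xo g s xs) gs = map Some ys" using bound_list by blast
  obtain s0 where s0: "ev Xo f s0 ys = Some z" using comp.IH(2) by auto
  let ?s = "max S s0"
  have "map (\<lambda>g. ev Xo g ?s xs) gs = map Some ys" using S by simp
  moreover have "ev Xo f ?s ys = Some z" using ev_mono[OF s0] by simp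
  ultimately have "ev Xo (RComp f gs) ?s xs = Some z" unfolding ev_RComp Let_def by (simp add: map_map o_def)
  then show ?case by blast
next
  case (prec0 g xs y h)
  then show ?case by auto
next
  case (precS g h n xs y z)
  then obtain s1 s2 where "ev Xo (RPrec g h) s1 (n # xs) = Some y" "ev Xo h s2 (n # y # xs) = Some z" by auto
  then have "ev Xo (RPrec g h) (max s1 s2) (n # xs) = Some y" "ev Xo h (max s1 s2) (n # y # xs) = Some z"
    using ev_mono max.cobounded1 max.cobounded2 by blast+
  then have "ev Xo (RPrec g h) (max s1 s2) (Suc n # xs) = Some z" by simp
  then show ?case by blast
next
  case (mu f n xs)
  obtain s0 where s0: "ev Xo f s0 (n # xs) = Some 0" using mu by blast
  have "\<forall>m<n. \<exists>k s. ev Xo f s (m # xs) = Some (Suc k)" using mu by blast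
  then obtain S where S: "\<forall>s\<ge>S. \<forall>m<n. \<exists>k. ev Xo f s (m # xs) = Some (Suc k)" using bound_mu by blast
  let ?s = "max (max S s0) n"
  have "mst (\<lambda>m. ev Xo f ?s (m # xs)) (Suc ?s) = n + 2"
  proof (rule mst_foundI)
    show "n < Suc ?s" by simp
    show "ev Xo f ?s (n # xs) = Some 0" using ev_mono[OF s0] by simp
    show "\<forall>m<n. \<exists>k. ev Xo f ?s (m # xs) = Some (Suc k)" using S by simp
  qed
  then have "ev Xo (RMu f) ?s xs = Some n" by (simp add: Let_def)
  then show ?case by blast
qed auto

lemma ev_iff: "rf_eval Xo f xs y \<longleftrightarrow> (\<exists>s. ev Xo f s xs = Some y)"
  using ev_complete ev_sound by blast


definition enc :: "nat option \<Rightarrow> nat" where "enc x = (case x of None \<Rightarrow> 0 | Some y \<Rightarrow> Suc y)"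

lemma enc_simps[simp]: "enc None = 0" "enc (Some y) = Suc y"
  by (auto simp: enc_def)

definition psh :: "nat \<Rightarrow> nat \<Rightarrow> (nat list \<Rightarrow> nat) list" where
  "psh a k = map (\<lambda>j l. l ! (j + a)) [0..<k]"

lemma psh_len[simp]: "length (psh a k) = k" by (simp add: psh_def)

lemma psh_map: "length l = a + k \<Longrightarrow> map (\<lambda>H. H l) (psh a k) = drop a l"
  by (rule nth_equalityI) (auto simp: psh_def add.commute)

lemma psh_cm: "a + k \<le> n \<Longrightarrow> \<forall>H\<in>set (psh a k). cm Xo n H"
  by (auto simp: psh_def intro!: cm_proj)

lemma cm_prod: "\<forall>F\<in>set Fs. cm Xo k F \<Longrightarrow> cm Xo k (\<lambda>l. prod_list (map (\<lambda>F. F l) Fs))"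
  by (induction Fs) (auto intro: cm_const cm_mul)

lemma cm_prod': "\<forall>g\<in>set gs. cm Xo k (Fg g) \<Longrightarrow> cm Xo k (\<lambda>l. prod_list (map (\<lambda>g. Fg g l) gs))"
  by (induction gs) (auto intro: cm_const cm_mul)

lemma enc_rec: "enc (rec_nat a (\<lambda>i acc. case acc of None \<Rightarrow> None | Some v \<Rightarrow> H i v) n)
   = rec_nat (enc a) (\<lambda>i r. if r \<noteq> 0 then enc (H i (r - 1)) else 0) n"
proof (induction n)
  case 0 then show ?case by simp
next
  case (Suc n)
  show ?case
  proof (cases "rec_nat a (\<lambda>i acc. case acc of None \<Rightarrow> None | Some v \<Rightarrow> H i v) n")
    case None then show ?thesis using Suc by simp
  next
    case (Some v)
    then have "rec_nat (enc a) (\<lambda>i r. if r \<noteq> 0 then enc (H i (r - 1)) else 0) n = Suc v" using Suc by simp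
    then show ?thesis using Some by simp
  qed
qed

fun mste :: "(nat \<Rightarrow> nat) \<Rightarrow> nat \<Rightarrow> nat" where
  "mste V 0 = 0"
| "mste V (Suc i) = (if mste V i \<noteq> 0 then mste V i else if V i = 0 then 1 else if V i = 1 then i + 2 else 0)"

lemma mst_mste: "mst F i = mste (\<lambda>i. enc (F i)) i"
  by (induction i) (auto split: option.splits nat.splits)

lemma mste_rec: "mste V i = rec_nat 0 (\<lambda>i st. if st \<noteq> 0 then st else if V i = 0 then 1 else if V i = 1 then i + 2 else 0) i"
  by (induction i) auto

definition E :: "nat set \<Rightarrow> rf \<Rightarrow> nat list \<Rightarrow> nat" where
  "E Xo f l = enc (ev Xo f (hd l) (tl l))"

lemma E_cons[simp]: "E Xo f (s # xs) = enc (ev Xo f s xs)"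
  by (simp add: E_def)

lemma prod_list_ones: "\<forall>x\<in>set xs. x = (1::nat) \<Longrightarrow> prod_list xs = 1"
  by (induction xs) auto

lemma prod_list_has0: "(0::nat) \<in> set xs \<Longrightarrow> prod_list xs = 0"
  by (induction xs) auto

lemma len_suc_ex: "length l = Suc k \<Longrightarrow> \<exists>s xs. l = s # xs \<and> length xs = k"
  by (cases l) auto

lemma cm_ev: "cm Xo (Suc k) (E Xo f)"
proof (induction f arbitrary: k)
  case RZero
  show ?case by (rule cm_cong[OF cm_const[of Xo "Suc k" 1]]) (auto dest!: len_suc_ex)
next
  case RSuc
  show ?case
  proof (cases k)
    case 0 then show ?thesis by (intro cm_cong[OF cm_zero]) (auto dest!: len_suc_ex)
  next
    case (Suc k')
    have "cm Xo (Suc k) (\<lambda>l. Suc (Suc (l ! 1)))" using Suc by (intro cm_suc cm_proj) simp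
    then show ?thesis by (rule cm_cong) (use Suc in \<open>auto dest!: len_suc_ex\<close>)
  qed
next
  case (RProj i)
  show ?case
  proof (cases "i < k")
    case False then show ?thesis by (intro cm_cong[OF cm_zero]) (auto dest!: len_suc_ex)
  next
    case True
    have "cm Xo (Suc k) (\<lambda>l. Suc (l ! Suc i))" using True by (intro cm_suc cm_proj) simp
    then show ?thesis by (rule cm_cong) (use True in \<open>auto dest!: len_suc_ex\<close>)
  qed
next
  case ROrc
  show ?case
  proof (cases k)
    case 0 then show ?thesis by (intro cm_cong[OF cm_zero]) (auto dest!: len_suc_ex)
  next
    case (Suc k')
    have "cm Xo (Suc k) (\<lambda>l. Suc (if l ! 1 \<in> Xo then 1 else 0))" using Suc by (intro cm_suc cm_orc cm_proj) simp
    then show ?thesis by (rule cm_cong) (use Suc in \<open>auto dest!: len_suc_ex\<close>)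
  qed
next
  case (RComp f gs)
  let ?P = "\<lambda>l. prod_list (map (\<lambda>g. (\<lambda>g l. if E Xo g l \<noteq> 0 then 1 else 0) g l) gs) :: nat"
  let ?Hs = "(\<lambda>l. l ! 0) # map (\<lambda>g l. E Xo g l - 1) gs"
  have h1: "cm Xo (Suc k) ?P"
  proof (rule cm_prod', rule ballI)
    fix g assume g: "g \<in> set gs"
    show "cm Xo (Suc k) (\<lambda>l. if E Xo g l \<noteq> 0 then 1 else 0)" using cp_nz[OF RComp.IH(2)[OF g]] unfolding cp_def .
  qed
  have h2: "cm Xo (Suc k) (\<lambda>l. E Xo f (map (\<lambda>H. H l) ?Hs))"
    using RComp.IH by (intro cm_comp) (auto intro: cm_pred[unfolded One_nat_def] cm_proj)
  have "cm Xo (Suc k) (\<lambda>l. ?P l * E Xo f (map (\<lambda>H. H l) ?Hs))" using h1 h2 by (rule cm_mul)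
  then show ?case
  proof (rule cm_cong)
    fix l :: "nat list" assume "length l = Suc k"
    then obtain s xs where l: "l = s # xs" by (cases l) auto
    let ?rs = "map (\<lambda>g. ev Xo g s xs) gs"
    show "?P l * E Xo f (map (\<lambda>H. H l) ?Hs) = E Xo (RComp f gs) l"
    proof (cases "None \<in> set ?rs")
      case True
      then obtain g where "g \<in> set gs" "ev Xo g s xs = None" by auto
      then have "(0::nat) \<in> set (map (\<lambda>g. (\<lambda>g l. if E Xo g l \<noteq> 0 then 1 else 0) g l) gs)" using l by force
      then have "?P l = 0" by (rule prod_list_has0)
      then show ?thesis using True l by (simp add: ev_RComp Let_def)
    next
      case False
      have P1: "?P l = 1"
      proof (rule prod_list_ones, rule ballI)
        fix x assume "x \<in> set (map (\<lambda>g. (\<lambda>g l. if E Xo g l \<noteq> 0 then 1 else 0) g l) gs)"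
        then obtain g where g: "g \<in> set gs" and x: "x = (if E Xo g l \<noteq> 0 then 1 else 0)" by auto
        have "ev Xo g s xs \<noteq> None" using False g by (metis image_eqI list.set_map)
        then show "x = 1" using x l by (auto simp: enc_def split: option.splits)
      qed
      have meq: "map (\<lambda>g. E Xo g l - 1) gs = map (\<lambda>g. the (ev Xo g s xs)) gs"
      proof (rule map_cong[OF refl])
        fix g assume g: "g \<in> set gs"
        have "ev Xo g s xs \<noteq> None" using False g by (metis image_eqI list.set_map)
        then obtain v where "ev Xo g s xs = Some v" by auto
        then show "E Xo g l - 1 = the (ev Xo g s xs)" using l by simp
      qed
      have hm: "map (\<lambda>H. H l) ?Hs = s # map (\<lambda>g. the (ev Xo g s xs)) gs"
        using meq l by simp
      have "?P l * E Xo f (map (\<lambda>H. H l) ?Hs) = E Xo f (s # map (\<lambda>g. the (ev Xo g s xs)) gs)"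
        by (simp only: P1 hm mult_1)
      then show ?thesis using False l by (simp add: ev_RComp Let_def map_map o_def)
    qed
  qed
next
  case (RPrec g h)
  show ?case
  proof (cases k)
    case 0 then show ?thesis by (intro cm_cong[OF cm_zero]) (auto dest!: len_suc_ex)
  next
    case (Suc k')
    define Fg where "Fg = E Xo g"
    define Hh where "Hh = [\<lambda>L. L!2, \<lambda>L. L!0, \<lambda>L. L!1 - 1] @ psh 3 k'"
    define Fh where "Fh = (\<lambda>L. if L!1 \<noteq> 0 then E Xo h (map (\<lambda>H. H L) Hh) else 0)"
    define R where "R = (\<lambda>L. rec_nat (Fg (tl L)) (\<lambda>n r. Fh (n # r # tl L)) (hd L))"
    define Ho where "Ho = [\<lambda>l. l!1, \<lambda>l. l!0] @ psh 2 k'"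
    have cFh: "cm Xo (Suc (Suc (Suc k'))) Fh" unfolding Fh_def
    proof (rule cm_if)
      show "cp Xo (Suc (Suc (Suc k'))) (\<lambda>L. L!1 \<noteq> 0)" by (intro cp_nz cm_proj) simp
      have "cm Xo (length Hh) (E Xo h)" using RPrec.IH(2)[of "Suc (Suc k')"] by (simp add: Hh_def)
      moreover have "\<forall>H\<in>set Hh. cm Xo (Suc (Suc (Suc k'))) H"
        using psh_cm[of 3 k' "Suc (Suc (Suc k'))" Xo] by (auto simp: Hh_def intro!: cm_proj cm_pred[unfolded One_nat_def])
      ultimately show "cm Xo (Suc (Suc (Suc k'))) (\<lambda>L. E Xo h (map (\<lambda>H. H L) Hh))" by (rule cm_comp)
    qed (rule cm_zero)
    have cR: "cm Xo (Suc (Suc k')) R" unfolding R_def Fg_def using RPrec.IH(1) cFh by (rule cm_prec)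
    have "cm Xo (Suc (Suc k')) (\<lambda>l. R (map (\<lambda>H. H l) Ho))"
    proof (rule cm_comp)
      show "cm Xo (length Ho) R" using cR by (simp add: Ho_def)
      show "\<forall>H\<in>set Ho. cm Xo (Suc (Suc k')) H"
        using psh_cm[of 2 k' "Suc (Suc k')" Xo] by (auto simp: Ho_def intro: cm_proj)
    qed
    then show ?thesis unfolding Suc
    proof (rule cm_cong)
      fix l :: "nat list" assume "length l = Suc (Suc k')"
      then obtain s n ys where l: "l = s # n # ys" and ys: "length ys = k'"
        by (metis len_suc_ex)
      have "map (\<lambda>H. H l) Ho = n # s # ys" using psh_map[of l 2 k'] l ys by (simp add: Ho_def)
      moreover have "Fh (i # r # s # ys) = (if r \<noteq> 0 then enc (ev Xo h s (i # (r - 1) # ys)) else 0)" for i r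
        using psh_map[of "i # r # s # ys" 3 k'] ys by (simp add: Fh_def Hh_def)
      ultimately have "R (map (\<lambda>H. H l) Ho) = rec_nat (enc (ev Xo g s ys)) (\<lambda>i r. if r \<noteq> 0 then enc (ev Xo h s (i # (r - 1) # ys)) else 0) n"
        by (simp add: R_def Fg_def)
      also have "\<dots> = E Xo (RPrec g h) l" using enc_rec[symmetric] l by simp
      finally show "R (map (\<lambda>H. H l) Ho) = E Xo (RPrec g h) l" .
    qed
  qed
next
  case (RMu f)
  define Hv where "Hv = [\<lambda>L. L!2, \<lambda>L. L!0] @ psh 3 k"
  define V where "V = (\<lambda>L. E Xo f (map (\<lambda>H. H L) Hv))"
  define Fh where "Fh = (\<lambda>L. if L!1 \<noteq> 0 then L!1 else if V L = 0 then 1 else if V L = 1 then L!0 + 2 else 0)"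
  define R where "R = (\<lambda>L. rec_nat ((\<lambda>_. 0) (tl L)) (\<lambda>n r. Fh (n # r # tl L)) (hd L))"
  define Ho where "Ho = [\<lambda>l. Suc (l!0), \<lambda>l. l!0] @ psh 1 k"
  have cV: "cm Xo (Suc (Suc (Suc k))) V" unfolding V_def
  proof (rule cm_comp)
    show "cm Xo (length Hv) (E Xo f)" using RMu.IH[of "Suc k"] by (simp add: Hv_def)
    show "\<forall>H\<in>set Hv. cm Xo (Suc (Suc (Suc k))) H"
      using psh_cm[of 3 k "Suc (Suc (Suc k))" Xo] by (auto simp: Hv_def intro: cm_proj)
  qed
  have cFh: "cm Xo (Suc (Suc (Suc k))) Fh" unfolding Fh_def
    by (intro cm_if cp_nz cp_eq cm_proj cV cm_const cm_add) auto
  have cR: "cm Xo (Suc (Suc k)) R" unfolding R_def using cm_zero cFh by (rule cm_prec)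
  have "cm Xo (Suc k) (\<lambda>l. R (map (\<lambda>H. H l) Ho))"
  proof (rule cm_comp)
    show "cm Xo (length Ho) R" using cR by (simp add: Ho_def)
    show "\<forall>H\<in>set Ho. cm Xo (Suc k) H"
      using psh_cm[of 1 k "Suc k" Xo] by (auto simp: Ho_def intro: cm_proj cm_suc)
  qed
  then have "cm Xo (Suc k) (\<lambda>l. R (map (\<lambda>H. H l) Ho) - 1)" by (rule cm_pred)
  then show ?case
  proof (rule cm_cong)
    fix l :: "nat list" assume "length l = Suc k"
    then obtain s xs where l: "l = s # xs" and xs: "length xs = k" by (metis len_suc_ex)
    have "map (\<lambda>H. H l) Ho = Suc s # s # xs" using psh_map[of l 1 k] l xs by (simp add: Ho_def)
    have "V (i # r # s # xs) = enc (ev Xo f s (i # xs))" for i r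
      using psh_map[of "i # r # s # xs" 3 k] xs by (simp add: V_def Hv_def)
    then have Feq: "Fh (i # r # s # xs) = (if r \<noteq> 0 then r else if enc (ev Xo f s (i # xs)) = 0 then 1
        else if enc (ev Xo f s (i # xs)) = 1 then i + 2 else 0)" for i r
      by (simp add: Fh_def)
    have req: "rec_nat 0 (\<lambda>n r. Fh (n # r # s # xs)) i = mste (\<lambda>i. enc (ev Xo f s (i # xs))) i" for i
      by (induction i) (simp_all only: Feq rec_nat_0_imp rec_nat_Suc_imp mste.simps old.nat.rec)
    have "R (map (\<lambda>H. H l) Ho) = mste (\<lambda>i. enc (ev Xo f s (i # xs))) (Suc s)"
    proof -
      have "R (Suc s # s # xs) = rec_nat 0 (\<lambda>n r. Fh (n # r # s # xs)) (Suc s)"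
        unfolding R_def by (simp only: list.sel)
      then show ?thesis unfolding \<open>map (\<lambda>H. H l) Ho = Suc s # s # xs\<close> using req[of "Suc s"] by simp
    qed
    also have "\<dots> = mst (\<lambda>m. ev Xo f s (m # xs)) (Suc s)" by (simp add: mst_mste)
    moreover have gen: "\<And>t::nat. t - 1 = enc (if 2 \<le> t then Some (t - 2) else None)" by auto
    ultimately show "R (map (\<lambda>H. H l) Ho) - 1 = E Xo (RMu f) l"
      using l by (simp add: Let_def del: mst.simps)
  qed
qed


definition ceq :: "nat set \<Rightarrow> (nat \<Rightarrow> nat \<Rightarrow> bool) \<Rightarrow> nat set \<Rightarrow> bool" where
  "ceq Xo Q U \<longleftrightarrow> cp Xo 2 (\<lambda>l. Q (l!0) (l!1)) \<and> (\<forall>n. n \<in> U \<longleftrightarrow> (\<exists>s. Q n s)) \<and>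
     (\<forall>n s s'. Q n s \<longrightarrow> s \<le> s' \<longrightarrow> Q n s')"

lemma ce_nf: "ce_in Xo U \<Longrightarrow> \<exists>Q. ceq Xo Q U"
proof -
  assume "ce_in Xo U"
  then obtain f where f: "\<forall>n. n \<in> U \<longleftrightarrow> (\<exists>y. rf_eval Xo f [n] y)" unfolding ce_in_def by auto
  define Q where "Q n s \<longleftrightarrow> ev Xo f s [n] \<noteq> None" for n s
  have e2: "cm Xo 2 (E Xo f)" using cm_ev[of Xo 1 f] by (simp add: numeral_2_eq_2)
  have "cm Xo 2 (\<lambda>l. E Xo f [l!1, l!0])"
    by (rule cm_comp2[OF e2]) (rule cm_proj, simp)+
  then have "cp Xo 2 (\<lambda>l. E Xo f [l!1, l!0] \<noteq> 0)" by (rule cp_nz)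
  then have "cp Xo 2 (\<lambda>l. Q (l!0) (l!1))" by (rule cp_cong) (auto simp: Q_def enc_def split: option.splits)
  moreover have "\<forall>n. n \<in> U \<longleftrightarrow> (\<exists>s. Q n s)" unfolding Q_def
  proof
    fix n
    have "(\<exists>y. rf_eval Xo f [n] y) \<longleftrightarrow> (\<exists>s. ev Xo f s [n] \<noteq> None)" unfolding ev_iff by blast
    then show "n \<in> U \<longleftrightarrow> (\<exists>s. ev Xo f s [n] \<noteq> None)" using f by blast
  qed
  moreover have "\<forall>n s s'. Q n s \<longrightarrow> s \<le> s' \<longrightarrow> Q n s'" unfolding Q_def
  proof (intro allI impI)
    fix n s s' assume "ev Xo f s [n] \<noteq> None" "s \<le> s'"
    then obtain y where "ev Xo f s [n] = Some y" by auto
    then show "ev Xo f s' [n] \<noteq> None" using ev_mono[OF _ \<open>s \<le> s'\<close>] by simp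
  qed
  ultimately show ?thesis unfolding ceq_def by blast
qed

lemma ceq_un: "ceq Xo Q1 U1 \<Longrightarrow> ceq Xo Q2 U2 \<Longrightarrow> ceq Xo (\<lambda>n s. Q1 n s \<or> Q2 n s) (U1 \<union> U2)"
proof -
  assume a: "ceq Xo Q1 U1" "ceq Xo Q2 U2"
  have "cp Xo 2 (\<lambda>l. Q1 (l!0) (l!1) \<or> Q2 (l!0) (l!1))"
    using a unfolding ceq_def by (intro cp_or) auto
  moreover have "\<forall>n. n \<in> U1 \<union> U2 \<longleftrightarrow> (\<exists>s. Q1 n s \<or> Q2 n s)" using a unfolding ceq_def by blast
  moreover have "\<forall>n s s'. (Q1 n s \<or> Q2 n s) \<longrightarrow> s \<le> s' \<longrightarrow> (Q1 n s' \<or> Q2 n s')"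
    using a unfolding ceq_def by blast
  ultimately show ?thesis unfolding ceq_def by blast
qed

definition fst_st :: "(nat \<Rightarrow> nat \<Rightarrow> bool) \<Rightarrow> nat \<Rightarrow> nat \<Rightarrow> bool" where
  "fst_st Q n s \<longleftrightarrow> Q n s \<and> (s = 0 \<or> \<not> Q n (s - 1))"

lemma fst_st_cp:
  assumes "ceq Xo Q U" "cm Xo k Fn" "cm Xo k Fs"
  shows "cp Xo k (\<lambda>l. fst_st Q (Fn l) (Fs l))"
proof -
  have q: "cp Xo 2 (\<lambda>l. Q (l!0) (l!1))" using assms(1) unfolding ceq_def by auto
  have qh: "\<And>A B. cm Xo k A \<Longrightarrow> cm Xo k B \<Longrightarrow> cp Xo k (\<lambda>l. Q (A l) (B l))"
  proof -
    fix A B assume "cm Xo k A" "cm Xo k B"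
    from cm_comp2[OF q[unfolded cp_def] this] show "cp Xo k (\<lambda>l. Q (A l) (B l))" unfolding cp_def by simp
  qed
  then have "cp Xo k (\<lambda>l. Q (Fn l) (Fs l) \<and> (Fs l = 0 \<or> \<not> Q (Fn l) (Fs l - 1)))"
    using assms(2,3) by (intro cp_and cp_or cp_not cp_eq cm_const cm_pred qh)
  then show ?thesis unfolding fst_st_def .
qed

lemma fst_st_lt: "ceq Xo Q U \<Longrightarrow> fst_st Q n s \<Longrightarrow> fst_st Q n s' \<Longrightarrow> \<not> s < s'"
proof
  assume a: "ceq Xo Q U" "fst_st Q n s" "fst_st Q n s'" "s < s'"
  have m: "\<forall>n s s'. Q n s \<longrightarrow> s \<le> s' \<longrightarrow> Q n s'" using a(1) unfolding ceq_def by blast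
  have "Q n s" using a(2) unfolding fst_st_def by blast
  moreover have "s \<le> s' - 1" using a(4) by simp
  ultimately have "Q n (s' - 1)" using m by blast
  then show False using a unfolding fst_st_def by auto
qed

lemma fst_st_unique: "ceq Xo Q U \<Longrightarrow> fst_st Q n s \<Longrightarrow> fst_st Q n s' \<Longrightarrow> s = s'"
  using fst_st_lt[of Xo Q U n s s'] fst_st_lt[of Xo Q U n s' s] by simp

lemma fst_st_ex: "ceq Xo Q U \<Longrightarrow> n \<in> U \<Longrightarrow> \<exists>s. fst_st Q n s"
proof -
  assume c: "ceq Xo Q U" "n \<in> U"
  have u: "\<forall>n. n \<in> U \<longleftrightarrow> (\<exists>s. Q n s)" using c(1) unfolding ceq_def by (rule conjunct1[OF conjunct2])
  then obtain s where s: "Q n s" using c(2) by blast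
  define m where "m = (LEAST s. Q n s)"
  have "Q n m" unfolding m_def using s by (rule LeastI)
  moreover have "\<not> Q n (m - 1)" if "m \<noteq> 0"
  proof
    assume "Q n (m - 1)"
    then have "m \<le> m - 1" unfolding m_def by (rule Least_le)
    then show False using that by simp
  qed
  ultimately have "fst_st Q n m" unfolding fst_st_def by (cases "m = 0") simp_all
  then show ?thesis by blast
qed

lemma fst_st_mem: "ceq Xo Q U \<Longrightarrow> fst_st Q n s \<Longrightarrow> n \<in> U"
  unfolding ceq_def fst_st_def by (meson conjunct1 conjunct2)


lemma cm_sum: "finite I \<Longrightarrow> (\<forall>i\<in>I. cm Xo k (F i)) \<Longrightarrow> cm Xo k (\<lambda>l. \<Sum>i\<in>I. F i l)"
proof (induction I rule: finite_induct)
  case empty then show ?case by (simp add: cm_const)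
next
  case (insert x I)
  then have "cm Xo k (\<lambda>l. F x l + (\<Sum>i\<in>I. F i l))" by (intro cm_add) auto
  then show ?case using insert by simp
qed

lemma cp_mem: "finite S \<Longrightarrow> cm Xo k F \<Longrightarrow> cp Xo k (\<lambda>l. F l \<in> S)"
proof (induction S rule: finite_induct)
  case empty then show ?case using cp_const[of Xo k False] by simp
next
  case (insert x S)
  then have "cp Xo k (\<lambda>l. F l = x \<or> F l \<in> S)" by (intro cp_or cp_eq cm_const) auto
  then show ?case by simp
qed

lemma cm_tab:
  assumes "cm Xo k F1" "cm Xo k F2"
  shows "cm Xo k (\<lambda>l. if F1 l < m \<and> F2 l < m then T (F1 l) (F2 l) else 0)"
proof -
  have "cm Xo k (\<lambda>l. \<Sum>i\<in>{..<m}. \<Sum>j\<in>{..<m}. (if F1 l = i \<and> F2 l = j then T i j else 0))"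
    using assms by (intro cm_sum ballI cm_if cp_and cp_eq cm_const) auto
  then show ?thesis
  proof (rule cm_cong)
    fix l :: "nat list"
    show "(\<Sum>i\<in>{..<m}. \<Sum>j\<in>{..<m}. (if F1 l = i \<and> F2 l = j then T i j else 0))
      = (if F1 l < m \<and> F2 l < m then T (F1 l) (F2 l) else 0)"
    proof (cases "F1 l < m \<and> F2 l < m")
      case True
      have "(\<Sum>i\<in>{..<m}. \<Sum>j\<in>{..<m}. (if F1 l = i \<and> F2 l = j then T i j else 0))
          = (\<Sum>i\<in>{..<m}. if F1 l = i then T i (F2 l) else 0)"
        using True by (intro sum.cong refl) (auto simp: sum.delta' if_distrib cong: if_cong)
      also have "\<dots> = T (F1 l) (F2 l)" using True by (simp add: sum.delta')
      finally show ?thesis using True by simp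
    next
      case False
      then show ?thesis by (auto intro!: sum.neutral)
    qed
  qed
qed

lemma rec_mod: "0 < m \<Longrightarrow> rec_nat 0 (\<lambda>n r. if Suc r = m then 0 else Suc r) a = a mod (m::nat)"
  by (induction a) (auto simp: mod_Suc)

lemma cm_mod: "0 < m \<Longrightarrow> cm Xo k F \<Longrightarrow> cm Xo k (\<lambda>l. F l mod m)"
proof -
  assume m: "0 < m" and F: "cm Xo k F"
  have "cm Xo 1 (\<lambda>xs. rec_nat ((\<lambda>_. 0) []) (\<lambda>n r. (\<lambda>L. if Suc (L!Suc 0) = m then 0 else Suc (L!Suc 0)) [n, r]) (xs!0))"
    by (rule cm_prec1[OF cm_zero]) (intro cm_if cp_eq cm_suc cm_proj cm_const; simp)
  then have "cm Xo 1 (\<lambda>xs. xs!0 mod m)" by (rule cm_cong) (simp add: rec_mod[OF m, symmetric] One_nat_def cong: if_cong)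
  from cm_comp1[OF this F] show ?thesis by simp
qed

lemma rec_div: "0 < m \<Longrightarrow> rec_nat 0 (\<lambda>n r. if Suc (n mod m) = m then Suc r else r) a = a div (m::nat)"
  by (induction a) (auto simp: div_Suc mod_Suc)

lemma cm_div: "0 < m \<Longrightarrow> cm Xo k F \<Longrightarrow> cm Xo k (\<lambda>l. F l div m)"
proof -
  assume m: "0 < m" and F: "cm Xo k F"
  have "cm Xo 1 (\<lambda>xs. rec_nat ((\<lambda>_. 0) []) (\<lambda>n r. (\<lambda>L. if Suc (L!0 mod m) = m then Suc (L!Suc 0) else L!Suc 0) [n, r]) (xs!0))"
    by (rule cm_prec1[OF cm_zero]) (intro cm_if cp_eq cm_suc cm_proj cm_const cm_mod m; simp)
  then have "cm Xo 1 (\<lambda>xs. xs!0 div m)" by (rule cm_cong) (simp add: rec_div[OF m, symmetric] One_nat_def cong: if_cong)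
  from cm_comp1[OF this F] show ?thesis by simp
qed


locale seqc =
  fixes Xo :: "nat set" and G :: "nat monoid" and m :: nat and A K :: "nat set"
    and Qu Qv :: "nat \<Rightarrow> nat \<Rightarrow> bool" and U V :: "nat set"
  assumes grp: "group G" and carr: "carrier G = {0..<m}"
    and subA: "subgroup A G" and subK: "subgroup K G" and AK: "A \<subseteq> K"
    and cu: "ceq Xo Qu U" and cv: "ceq Xo Qv V" and VU: "V \<subseteq> U"
begin

lemma m_pos: "0 < m"
  using monoid.one_closed[OF group.is_monoid[OF grp]] carr by auto

lemma K_lt: "x \<in> K \<Longrightarrow> x < m"
  using subgroup.subset[OF subK] carr by auto

definition tagn :: "nat \<Rightarrow> nat \<Rightarrow> nat" where
  "tagn n x = (if x \<in> A then 0 else if x \<in> K then Suc (THE s. fst_st Qu n s) else Suc (THE s. fst_st Qv n s))"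

definition code :: "nat \<Rightarrow> nat \<Rightarrow> nat" where
  "code n x = x + m * tagn n x"

definition Dn :: "nat \<Rightarrow> nat set" where
  "Dn n = (if n \<in> V then carrier G else if n \<in> U then K else A)"

definition Cs :: "nat \<Rightarrow> nat monoid" where
  "Cs n = \<lparr>carrier = code n ` Dn n, monoid.mult = (\<lambda>a b. code n ((a mod m) \<otimes>\<^bsub>G\<^esub> (b mod m))), one = \<one>\<^bsub>G\<^esub>\<rparr>"

lemma code_mod: "x < m \<Longrightarrow> code n x mod m = x"
  by (simp add: code_def)

lemma code_div: "x < m \<Longrightarrow> code n x div m = tagn n x"
  using m_pos by (simp add: code_def)

lemma Dn_sub: "subgroup (Dn n) G"
  unfolding Dn_def using subA subK group.subgroup_self[OF grp] by auto

lemma Dn_lt: "x \<in> Dn n \<Longrightarrow> x < m"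
  using subgroup.subset[OF Dn_sub] carr by fastforce

lemma mem_iff: "a \<in> carrier (Cs n) \<longleftrightarrow>
   (a mod m \<in> A \<and> a div m = 0) \<or>
   (a mod m \<in> K \<and> a mod m \<notin> A \<and> a div m \<noteq> 0 \<and> fst_st Qu n (a div m - 1)) \<or>
   (a mod m \<notin> K \<and> a div m \<noteq> 0 \<and> fst_st Qv n (a div m - 1))"
  (is "?L \<longleftrightarrow> ?R")
proof
  assume ?L
  then obtain x where x: "x \<in> Dn n" and a: "a = code n x" by (auto simp: Cs_def)
  have xm: "x < m" using Dn_lt[OF x] .
  have am: "a mod m = x" "a div m = tagn n x" using a code_mod[OF xm] code_div[OF xm] by auto
  show ?R
  proof (cases "x \<in> A")
    case True then show ?thesis using am by (simp add: tagn_def)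
  next
    case nA: False
    show ?thesis
    proof (cases "x \<in> K")
      case True
      then have "n \<in> U" using x nA by (auto simp: Dn_def split: if_splits) (use VU in blast)
      then obtain s where s: "fst_st Qu n s" using fst_st_ex[OF cu] by blast
      then have "(THE s. fst_st Qu n s) = s" using fst_st_unique[OF cu] by blast
      then show ?thesis using am nA True s by (simp add: tagn_def)
    next
      case False
      then have "n \<in> V" using x AK by (auto simp: Dn_def split: if_splits)
      then obtain s where s: "fst_st Qv n s" using fst_st_ex[OF cv] by blast
      then have "(THE s. fst_st Qv n s) = s" using fst_st_unique[OF cv] by blast
      then show ?thesis using am nA False s AK by (simp add: tagn_def)
    qed
  qed
next
  assume r: ?R
  define x where "x = a mod m"
  have xm: "x < m" using m_pos by (simp add: x_def)
  have a: "a = x + m * (a div m)" by (simp add: x_def)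
  show ?L
  proof (cases "x \<in> A")
    case True
    then have "a div m = 0" using r x_def AK by auto
    then have "a = code n x" using a True by (simp add: code_def tagn_def)
    moreover have "x \<in> Dn n" using True AK subgroup.subset[OF subK] carr xm by (auto simp: Dn_def)
    ultimately show ?thesis by (auto simp: Cs_def)
  next
    case nA: False
    show ?thesis
    proof (cases "x \<in> K")
      case True
      then have s: "a div m \<noteq> 0" "fst_st Qu n (a div m - 1)" using r nA x_def by auto
      then have "(THE s. fst_st Qu n s) = a div m - 1" using fst_st_unique[OF cu] by blast
      then have "a = code n x" using a True nA s by (simp add: code_def tagn_def)
      moreover have "n \<in> U" using fst_st_mem[OF cu s(2)] .
      then have "x \<in> Dn n" using True carr xm by (auto simp: Dn_def)
      ultimately show ?thesis by (auto simp: Cs_def)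
    next
      case False
      then have s: "a div m \<noteq> 0" "fst_st Qv n (a div m - 1)" using r nA x_def by auto
      then have "(THE s. fst_st Qv n s) = a div m - 1" using fst_st_unique[OF cv] by blast
      then have "a = code n x" using a False nA s AK by (auto simp: code_def tagn_def)
      moreover have "n \<in> V" using fst_st_mem[OF cv s(2)] .
      then have "x \<in> Dn n" using carr xm by (auto simp: Dn_def)
      ultimately show ?thesis by (auto simp: Cs_def)
    qed
  qed
qed

lemma carrier_Cs: "a \<in> carrier (Cs n) \<Longrightarrow> a mod m \<in> Dn n \<and> a = code n (a mod m)"
  by (auto simp: Cs_def code_mod Dn_lt)

lemma code_inj: "x < m \<Longrightarrow> y < m \<Longrightarrow> code n x = code n y \<Longrightarrow> x = y"
  by (metis code_mod)

lemma G_closed: "x \<in> carrier G \<Longrightarrow> y \<in> carrier G \<Longrightarrow> x \<otimes>\<^bsub>G\<^esub> y \<in> carrier G"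
  using monoid.m_closed[OF group.is_monoid[OF grp]] by blast

lemma Dn_carr: "x \<in> Dn n \<Longrightarrow> x \<in> carrier G"
  using subgroup.subset[OF Dn_sub] by blast

lemma mult_iff:
  assumes "a \<in> carrier (Cs n)" "b \<in> carrier (Cs n)" "c \<in> carrier (Cs n)"
  shows "a \<otimes>\<^bsub>Cs n\<^esub> b = c \<longleftrightarrow> (a mod m) \<otimes>\<^bsub>G\<^esub> (b mod m) = c mod m"
proof -
  have x: "a mod m \<in> carrier G" "b mod m \<in> carrier G" and c: "c = code n (c mod m)" "c mod m < m"
    using carrier_Cs[OF assms(1)] carrier_Cs[OF assms(2)] carrier_Cs[OF assms(3)] Dn_carr Dn_lt by auto
  have p: "(a mod m) \<otimes>\<^bsub>G\<^esub> (b mod m) < m" using G_closed[OF x] carr by auto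
  have "a \<otimes>\<^bsub>Cs n\<^esub> b = code n ((a mod m) \<otimes>\<^bsub>G\<^esub> (b mod m))" by (simp add: Cs_def)
  moreover have "code n ((a mod m) \<otimes>\<^bsub>G\<^esub> (b mod m)) = c \<longleftrightarrow> (a mod m) \<otimes>\<^bsub>G\<^esub> (b mod m) = c mod m"
  proof
    assume "code n ((a mod m) \<otimes>\<^bsub>G\<^esub> (b mod m)) = c"
    then have "code n ((a mod m) \<otimes>\<^bsub>G\<^esub> (b mod m)) = code n (c mod m)" using c(1) by simp
    then show "(a mod m) \<otimes>\<^bsub>G\<^esub> (b mod m) = c mod m" using code_inj[OF p c(2)] by blast
  next
    assume "(a mod m) \<otimes>\<^bsub>G\<^esub> (b mod m) = c mod m"
    then show "code n ((a mod m) \<otimes>\<^bsub>G\<^esub> (b mod m)) = c" using c(1) by simp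
  qed
  ultimately show ?thesis by simp
qed

lemma cp_carr: "cm Xo k Fn \<Longrightarrow> cm Xo k Fa \<Longrightarrow> cp Xo k (\<lambda>l. Fa l \<in> carrier (Cs (Fn l)))"
proof -
  assume n: "cm Xo k Fn" and a: "cm Xo k Fa"
  have fA: "finite A" and fK: "finite K" using subgroup.subset[OF subA] subgroup.subset[OF subK] carr
    by (auto intro: finite_subset)
  have amod: "cm Xo k (\<lambda>l. Fa l mod m)" and adiv: "cm Xo k (\<lambda>l. Fa l div m)"
    using cm_mod[OF m_pos a] cm_div[OF m_pos a] .
  have "cp Xo k (\<lambda>l. (Fa l mod m \<in> A \<and> Fa l div m = 0) \<or>
   (Fa l mod m \<in> K \<and> \<not> Fa l mod m \<in> A \<and> \<not> Fa l div m = 0 \<and> fst_st Qu (Fn l) (Fa l div m - 1)) \<or>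
   (\<not> Fa l mod m \<in> K \<and> \<not> Fa l div m = 0 \<and> fst_st Qv (Fn l) (Fa l div m - 1)))"
    by (intro cp_or cp_and cp_not cp_mem fA fK amod cp_eq adiv cm_const fst_st_cp[OF cu] fst_st_cp[OF cv] n cm_pred)
  then show ?thesis by (rule cp_cong) (simp only: mem_iff)
qed

lemma cp_mult: "cp Xo 4 (\<lambda>l. l!1 \<in> carrier (Cs (l!0)) \<and> l!2 \<in> carrier (Cs (l!0)) \<and> l!3 \<in> carrier (Cs (l!0)) \<and>
   l!1 \<otimes>\<^bsub>Cs (l!0)\<^esub> l!2 = l!3)"
proof -
  have p: "\<And>i. i < 4 \<Longrightarrow> cm Xo 4 (\<lambda>l. l ! i)" by (rule cm_proj)
  have "cp Xo 4 (\<lambda>l. l!1 \<in> carrier (Cs (l!0)) \<and> l!2 \<in> carrier (Cs (l!0)) \<and> l!3 \<in> carrier (Cs (l!0)) \<and>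
     (if l!1 mod m < m \<and> l!2 mod m < m then (l!1 mod m) \<otimes>\<^bsub>G\<^esub> (l!2 mod m) else 0) = l!3 mod m)"
  proof -
    have p0: "cm Xo 4 (\<lambda>l. l!0)" and p1: "cm Xo 4 (\<lambda>l. l!1)" and p2: "cm Xo 4 (\<lambda>l. l!2)" and p3: "cm Xo 4 (\<lambda>l. l!3)"
      by (rule p, simp)+
    show ?thesis
      by (intro cp_and cp_carr[OF p0 p1] cp_carr[OF p0 p2] cp_carr[OF p0 p3] cp_eq cm_tab cm_mod[OF m_pos] p1 p2 p3)
  qed
  then show ?thesis
  proof (rule cp_cong)
    fix l :: "nat list"
    show "(l!1 \<in> carrier (Cs (l!0)) \<and> l!2 \<in> carrier (Cs (l!0)) \<and> l!3 \<in> carrier (Cs (l!0)) \<and>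
     (if l!1 mod m < m \<and> l!2 mod m < m then (l!1 mod m) \<otimes>\<^bsub>G\<^esub> (l!2 mod m) else 0) = l!3 mod m) =
      (l!1 \<in> carrier (Cs (l!0)) \<and> l!2 \<in> carrier (Cs (l!0)) \<and> l!3 \<in> carrier (Cs (l!0)) \<and>
   l!1 \<otimes>\<^bsub>Cs (l!0)\<^esub> l!2 = l!3)"
    proof (cases "l!1 \<in> carrier (Cs (l!0)) \<and> l!2 \<in> carrier (Cs (l!0)) \<and> l!3 \<in> carrier (Cs (l!0))")
      case True
      have "l!1 mod m < m \<and> l!2 mod m < m" using m_pos by simp
      then have "(if l!1 mod m < m \<and> l!2 mod m < m then (l!1 mod m) \<otimes>\<^bsub>G\<^esub> (l!2 mod m) else 0)
        = (l!1 mod m) \<otimes>\<^bsub>G\<^esub> (l!2 mod m)" by (simp only: if_True simp_thms)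
      then show ?thesis using True mult_iff[of "l!1" "l!0" "l!2" "l!3"] by simp
    next
      case False then show ?thesis by blast
    qed
  qed
qed

lemma cp_one: "cp Xo 2 (\<lambda>l. l!1 = \<one>\<^bsub>Cs (l!0)\<^esub>)"
proof -
  have "cp Xo 2 (\<lambda>l. l!1 = \<one>\<^bsub>G\<^esub>)" by (intro cp_eq cm_proj cm_const) simp
  then show ?thesis by (rule cp_cong) (simp add: Cs_def)
qed

end

lemma cp_rf2: "cp Xo 2 P \<Longrightarrow> \<exists>f. \<forall>n a. rf_eval Xo f [n, a] (if P [n, a] then 1 else 0)"
proof -
  assume "cp Xo 2 P"
  then obtain f where "\<forall>xs. length xs = 2 \<longrightarrow> rf_eval Xo f xs (if P xs then 1 else 0)"
    unfolding cp_def cm_def cb_def by blast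
  then show ?thesis by (intro exI[of _ f] allI) simp
qed

lemma cp_rf4: "cp Xo 4 P \<Longrightarrow> \<exists>f. \<forall>n a b c. rf_eval Xo f [n, a, b, c] (if P [n, a, b, c] then 1 else 0)"
proof -
  assume "cp Xo 4 P"
  then obtain f where "\<forall>xs. length xs = 4 \<longrightarrow> rf_eval Xo f xs (if P xs then 1 else 0)"
    unfolding cp_def cm_def cb_def by blast
  then show ?thesis by (intro exI[of _ f] allI) simp
qed

context seqc begin

lemma ucs: "unif_computable_seq Xo Cs"
proof -
  have c1: "cp Xo 2 (\<lambda>l. l!1 \<in> carrier (Cs (l!0)))" by (intro cp_carr cm_proj) simp_all
  show ?thesis unfolding unif_computable_seq_def
    using cp_rf2[OF c1] cp_rf2[OF cp_one] cp_rf4[OF cp_mult] by simp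
qed

lemma code_iso: "code n \<in> iso (G\<lparr>carrier := Dn n\<rparr>) (Cs n)"
proof -
  have bij: "bij_betw (code n) (Dn n) (code n ` Dn n)"
    by (rule inj_on_imp_bij_betw) (meson Dn_lt code_inj inj_onI)
  have "code n (x \<otimes>\<^bsub>G\<^esub> y) = code n x \<otimes>\<^bsub>Cs n\<^esub> code n y" if "x \<in> Dn n" "y \<in> Dn n" for x y
    using that by (simp add: Cs_def code_mod Dn_lt)
  moreover have "code n x \<in> carrier (Cs n)" if "x \<in> Dn n" for x using that by (simp add: Cs_def)
  ultimately show ?thesis using bij unfolding iso_def hom_def by (auto simp: Cs_def)
qed

end


lemma pow_iso: "h \<in> iso M N \<Longrightarrow> group M \<Longrightarrow> group N \<Longrightarrow> x \<in> carrier M \<Longrightarrow>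
  h (x [^]\<^bsub>M\<^esub> (n::nat)) = h x [^]\<^bsub>N\<^esub> n"
  by (rule hom_nat_pow) (auto simp: iso_def)

lemma pl_iso:
  assumes "h \<in> iso M N" "group M" "group N"
  shows "h ` p_layer p M k = p_layer p N k"
proof -
  have c: "h ` carrier M = carrier N" using assms(1) by (auto simp: iso_def bij_betw_def)
  have "h ` p_layer p M k = (\<lambda>x. h (x [^]\<^bsub>M\<^esub> (p ^ k))) ` carrier M" unfolding p_layer_def by auto
  also have "\<dots> = (\<lambda>x. h x [^]\<^bsub>N\<^esub> (p ^ k)) ` carrier M" using pow_iso[OF assms] by (intro image_cong) auto
  also have "\<dots> = (\<lambda>y. y [^]\<^bsub>N\<^esub> (p ^ k)) ` (h ` carrier M)" by (simp add: image_image)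
  also have "\<dots> = (\<lambda>y. y [^]\<^bsub>N\<^esub> (p ^ k)) ` carrier N" using c by simp
  finally show ?thesis unfolding p_layer_def .
qed

lemma pl_sub: "group M \<Longrightarrow> p_layer p M k \<subseteq> carrier M"
  unfolding p_layer_def using group.is_monoid monoid.nat_pow_closed by fastforce

lemma hl_iso:
  assumes "h \<in> iso M N" "group M" "group N" "has_length p M n"
  shows "has_length p N n"
proof -
  have inj: "inj_on h (carrier M)" using assms(1) by (auto simp: iso_def bij_betw_def)
  have eq: "p_layer p N a = p_layer p N b \<longleftrightarrow> p_layer p M a = p_layer p M b" for a b
    using inj_on_image_eq_iff[OF inj pl_sub[OF assms(2)] pl_sub[OF assms(2)]] pl_iso[OF assms(1-3)] by metis
  show ?thesis using assms(4) unfolding has_length_def eq .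
qed

lemma ap_iso:
  assumes "abelian_p_group p M" "h \<in> iso M N" "group N"
  shows "abelian_p_group p N"
proof -
  have cg: "comm_group M" using assms(1) by (simp add: abelian_p_group_def)
  have gM: "group M" using cg by (simp add: comm_group_def)
  have "M \<cong> N" using assms(2) by (auto simp: is_iso_def)
  then have "comm_group N" using comm_group.iso_imp_comm_group[OF cg] group.is_monoid[OF assms(3)] by blast
  moreover have "\<exists>n. y [^]\<^bsub>N\<^esub> (p ^ n) = \<one>\<^bsub>N\<^esub>" if y: "y \<in> carrier N" for y
  proof -
    obtain x where x: "x \<in> carrier M" "y = h x" using y assms(2) by (auto simp: iso_def bij_betw_def)
    then obtain n where "x [^]\<^bsub>M\<^esub> (p ^ n) = \<one>\<^bsub>M\<^esub>" using assms(1) by (auto simp: abelian_p_group_def)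
    then have "h (x [^]\<^bsub>M\<^esub> (p ^ n)) = \<one>\<^bsub>N\<^esub>"
      using hom_one[of h M N] assms(2,3) gM by (auto simp: iso_def)
    then show ?thesis using pow_iso[OF assms(2) gM assms(3) x(1)] x(2) by auto
  qed
  ultimately show ?thesis unfolding abelian_p_group_def by blast
qed

lemma pow1: "monoid B \<Longrightarrow> x \<in> carrier B \<Longrightarrow> x [^]\<^bsub>B\<^esub> (1::nat) = x"
  using monoid.nat_pow_Suc[of B x 0] monoid.nat_pow_0[of B x] monoid.l_one[of B x] by simp

lemma pl_Suc:
  assumes "group B"
  shows "p_layer p B (Suc k) = (\<lambda>y. y [^]\<^bsub>B\<^esub> p) ` p_layer p B k"
proof -
  have "x [^]\<^bsub>B\<^esub> (p ^ Suc k) = (x [^]\<^bsub>B\<^esub> (p ^ k)) [^]\<^bsub>B\<^esub> p" if "x \<in> carrier B" for x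
    using monoid.nat_pow_pow[OF group.is_monoid[OF assms] that] by (simp add: mult.commute)
  then show ?thesis unfolding p_layer_def image_image by (intro image_cong) auto
qed

lemma pl_stab:
  assumes "group B" "p_layer p B k = p_layer p B (Suc k)"
  shows "p_layer p B (k + j) = p_layer p B k"
proof (induction j)
  case 0 then show ?case by simp
next
  case (Suc j)
  have "p_layer p B (k + Suc j) = (\<lambda>y. y [^]\<^bsub>B\<^esub> p) ` p_layer p B (k + j)"
    using pl_Suc[OF assms(1)] by simp
  also have "\<dots> = (\<lambda>y. y [^]\<^bsub>B\<^esub> p) ` p_layer p B k" using Suc by simp
  also have "\<dots> = p_layer p B k" using pl_Suc[OF assms(1)] assms(2) by simp
  finally show ?case .
qed

lemma pl_one: "group B \<Longrightarrow> \<one>\<^bsub>B\<^esub> \<in> p_layer p B k"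
  unfolding p_layer_def using group.is_monoid monoid.nat_pow_one monoid.one_closed
  by (metis image_eqI)

lemma crit:
  assumes gB: "group B" and N: "0 < N" and all: "\<forall>x\<in>carrier B. x [^]\<^bsub>B\<^esub> (p ^ N) = \<one>\<^bsub>B\<^esub>"
    and g: "g \<in> carrier B" "g [^]\<^bsub>B\<^esub> (p ^ (N - 1)) \<noteq> \<one>\<^bsub>B\<^esub>"
  shows "has_length p B N"
proof -
  have mB: "monoid B" using gB by (rule group.is_monoid)
  have lN: "p_layer p B N = {\<one>\<^bsub>B\<^esub>}" using all g(1) unfolding p_layer_def by auto
  have lSN: "p_layer p B (Suc N) = {\<one>\<^bsub>B\<^esub>}" using pl_Suc[OF gB, of p N] lN monoid.nat_pow_one[OF mB] by simp
  have "p_layer p B k \<noteq> p_layer p B (Suc k)" if k: "k < N" for k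
  proof
    assume eq: "p_layer p B k = p_layer p B (Suc k)"
    have "p_layer p B (k + (N - k)) = p_layer p B k" by (rule pl_stab[OF gB eq])
    then have "p_layer p B k = {\<one>\<^bsub>B\<^esub>}" using lN k by simp
    then have gk: "g [^]\<^bsub>B\<^esub> (p ^ k) = \<one>\<^bsub>B\<^esub>" using g(1) unfolding p_layer_def by auto
    have "g [^]\<^bsub>B\<^esub> (p ^ (N - 1)) = (g [^]\<^bsub>B\<^esub> (p ^ k)) [^]\<^bsub>B\<^esub> (p ^ (N - 1 - k))"
      using monoid.nat_pow_pow[OF mB g(1)] k by (simp add: power_add[symmetric])
    then show False using gk g(2) monoid.nat_pow_one[OF mB] by simp
  qed
  then show ?thesis unfolding has_length_def using lN lSN by simp
qed

lemma stab_triv: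
  assumes ap: "abelian_p_group p B" and fin: "finite (carrier B)"
    and eq: "p_layer p B k = p_layer p B (Suc k)"
  shows "p_layer p B k = {\<one>\<^bsub>B\<^esub>}"
proof -
  have gB: "group B" using ap by (simp add: abelian_p_group_def comm_group_def)
  have mB: "monoid B" using gB by (rule group.is_monoid)
  let ?L = "p_layer p B k" and ?f = "\<lambda>y. y [^]\<^bsub>B\<^esub> p"
  have fL: "?f ` ?L = ?L" using pl_Suc[OF gB] eq by simp
  have finL: "finite ?L" using fin pl_sub[OF gB] by (rule finite_subset[rotated])
  have inj: "inj_on ?f ?L" using fL finL by (intro eq_card_imp_inj_on) auto
  have one: "\<one>\<^bsub>B\<^esub> \<in> ?L" by (rule pl_one[OF gB])
  have key: "\<forall>y\<in>?L. y [^]\<^bsub>B\<^esub> (p ^ n) = \<one>\<^bsub>B\<^esub> \<longrightarrow> y = \<one>\<^bsub>B\<^esub>" for n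
  proof (induction n)
    case 0 show ?case
    proof (intro ballI impI)
      fix y assume "y \<in> ?L" "y [^]\<^bsub>B\<^esub> (p ^ 0) = \<one>\<^bsub>B\<^esub>"
      then show "y = \<one>\<^bsub>B\<^esub>" using pl_sub[OF gB] pow1[OF mB, of y] by auto
    qed
  next
    case (Suc n)
    show ?case
    proof (intro ballI impI)
      fix y assume y: "y \<in> ?L" and yp: "y [^]\<^bsub>B\<^esub> (p ^ Suc n) = \<one>\<^bsub>B\<^esub>"
      have yc: "y \<in> carrier B" using y pl_sub[OF gB] by auto
      have "(?f y) [^]\<^bsub>B\<^esub> (p ^ n) = y [^]\<^bsub>B\<^esub> (p ^ Suc n)"
        using monoid.nat_pow_pow[OF mB yc] by simp
      moreover have "?f y \<in> ?L" using fL y by blast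
      ultimately have "?f y = \<one>\<^bsub>B\<^esub>" using Suc yp by auto
      then have "?f y = ?f \<one>\<^bsub>B\<^esub>" using monoid.nat_pow_one[OF mB] by simp
      then show "y = \<one>\<^bsub>B\<^esub>" using inj y one by (auto dest: inj_onD)
    qed
  qed
  have "y = \<one>\<^bsub>B\<^esub>" if y: "y \<in> ?L" for y
  proof -
    have "y \<in> carrier B" using y pl_sub[OF gB] by blast
    then obtain n where "y [^]\<^bsub>B\<^esub> (p ^ n) = \<one>\<^bsub>B\<^esub>" using ap by (auto simp: abelian_p_group_def)
    then show ?thesis using key y by blast
  qed
  then show ?thesis using one by blast
qed

lemma crit_conv:
  assumes ap: "abelian_p_group p B" and fin: "finite (carrier B)"
    and hl: "has_length p B N" and nt: "carrier B \<noteq> {\<one>\<^bsub>B\<^esub>}"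
  shows "0 < N \<and> (\<forall>x\<in>carrier B. x [^]\<^bsub>B\<^esub> (p ^ N) = \<one>\<^bsub>B\<^esub>) \<and>
    (\<exists>g\<in>carrier B. g [^]\<^bsub>B\<^esub> (p ^ (N - 1)) \<noteq> \<one>\<^bsub>B\<^esub>)"
proof -
  have gB: "group B" using ap by (simp add: abelian_p_group_def comm_group_def)
  have mB: "monoid B" using gB by (rule group.is_monoid)
  have lN: "p_layer p B N = {\<one>\<^bsub>B\<^esub>}" using stab_triv[OF ap fin] hl by (simp add: has_length_def)
  have l0: "p_layer p B 0 = carrier B" unfolding p_layer_def using pow1[OF mB] by simp
  have N: "0 < N" using lN l0 nt by (cases N) auto
  moreover have "\<forall>x\<in>carrier B. x [^]\<^bsub>B\<^esub> (p ^ N) = \<one>\<^bsub>B\<^esub>" using lN unfolding p_layer_def by auto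
  moreover have "\<exists>g\<in>carrier B. g [^]\<^bsub>B\<^esub> (p ^ (N - 1)) \<noteq> \<one>\<^bsub>B\<^esub>"
  proof (rule ccontr)
    assume "\<not> ?thesis"
    then have "p_layer p B (N - 1) \<subseteq> {\<one>\<^bsub>B\<^esub>}" unfolding p_layer_def by auto
    then have "p_layer p B (N - 1) = p_layer p B (Suc (N - 1))" using lN N pl_one[OF gB] by auto
    then show False using hl N unfolding has_length_def by (metis diff_less zero_less_one)
  qed
  ultimately show ?thesis by blast
qed

lemma nat_int_pow[simp]: "nat (int p ^ N) = p ^ N"
  by (metis nat_int of_nat_power)

lemma pow_mod_n:
  assumes gB: "group B" and g: "g \<in> carrier B" "g [^]\<^bsub>B\<^esub> (n::nat) = \<one>\<^bsub>B\<^esub>"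
  shows "g [^]\<^bsub>B\<^esub> (a::nat) = g [^]\<^bsub>B\<^esub> (a mod n)"
proof -
  have mB: "monoid B" using gB by (rule group.is_monoid)
  have "g [^]\<^bsub>B\<^esub> a = g [^]\<^bsub>B\<^esub> (n * (a div n) + a mod n)" by simp
  also have "\<dots> = (g [^]\<^bsub>B\<^esub> n) [^]\<^bsub>B\<^esub> (a div n) \<otimes>\<^bsub>B\<^esub> g [^]\<^bsub>B\<^esub> (a mod n)"
    using monoid.nat_pow_mult[OF mB g(1)] monoid.nat_pow_pow[OF mB g(1)] by simp
  also have "\<dots> = g [^]\<^bsub>B\<^esub> (a mod n)"
    using g mB monoid.l_one[OF mB monoid.nat_pow_closed[OF mB g(1)]] by (simp add: monoid.nat_pow_one)
  finally show ?thesis .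
qed

lemma ord_pN:
  assumes gB: "group B" and p: "Factorial_Ring.prime p" and N: "0 < N" and g: "g \<in> carrier B"
    "g [^]\<^bsub>B\<^esub> (p ^ N) = \<one>\<^bsub>B\<^esub>" "g [^]\<^bsub>B\<^esub> (p ^ (N - 1)) \<noteq> \<one>\<^bsub>B\<^esub>"
  shows "group.ord B g = p ^ N"
proof -
  have "group.ord B g dvd p ^ N" using group.pow_eq_id[OF gB g(1)] g(2) by simp
  then obtain i where i: "i \<le> N" "group.ord B g = p ^ i" using divides_primepow_nat[OF p] by blast
  have "\<not> i < N"
  proof
    assume "i < N"
    then have "p ^ i dvd p ^ (N - 1)" by (intro le_imp_power_dvd) simp
    then have "g [^]\<^bsub>B\<^esub> (p ^ (N - 1)) = \<one>\<^bsub>B\<^esub>" using group.pow_eq_id[OF gB g(1)] i(2) by simp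
    then show False using g(3) by simp
  qed
  then show ?thesis using i by simp
qed

definition cpow :: "('a, 'b) monoid_scheme \<Rightarrow> 'a \<Rightarrow> int \<Rightarrow> 'a" where
  "cpow B g i = g [^]\<^bsub>B\<^esub> (nat i)"

lemma cyc_hom:
  assumes gB: "group B" and p: "Factorial_Ring.prime p" and N: "0 < N" and g: "g \<in> carrier B"
    "g [^]\<^bsub>B\<^esub> (p ^ N) = \<one>\<^bsub>B\<^esub>" "g [^]\<^bsub>B\<^esub> (p ^ (N - 1)) \<noteq> \<one>\<^bsub>B\<^esub>"
  shows "cpow B g \<in> hom (integer_mod_group (p ^ N)) B"
    and "inj_on (cpow B g) (carrier (integer_mod_group (p ^ N)))"
proof -
  have mB: "monoid B" using gB by (rule group.is_monoid)
  have pN: "0 < p ^ N" using p by (simp add: prime_gt_0_nat)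
  have ca: "carrier (integer_mod_group (p ^ N)) = {0..<int (p ^ N)}"
    using pN by (simp add: carrier_integer_mod_group)
  show "cpow B g \<in> hom (integer_mod_group (p ^ N)) B"
    unfolding hom_def
  proof (intro CollectI conjI ballI)
    show "cpow B g \<in> carrier (integer_mod_group (p ^ N)) \<rightarrow> carrier B"
      using g(1) mB by (auto simp: cpow_def monoid.nat_pow_closed)
    fix x y assume x: "x \<in> carrier (integer_mod_group (p ^ N))" and y: "y \<in> carrier (integer_mod_group (p ^ N))"
    then have x0: "0 \<le> x" and y0: "0 \<le> y" using ca by auto
    have "nat ((x + y) mod int (p ^ N)) = (nat x + nat y) mod (p ^ N)"
      using x0 y0 by (simp add: nat_mod_distrib nat_add_distrib)
    then have "cpow B g ((x + y) mod int (p ^ N)) = g [^]\<^bsub>B\<^esub> (nat x + nat y)"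
      unfolding cpow_def using pow_mod_n[OF gB g(1) g(2), of "nat x + nat y"] by simp
    also have "\<dots> = cpow B g x \<otimes>\<^bsub>B\<^esub> cpow B g y"
      unfolding cpow_def using monoid.nat_pow_mult[OF mB g(1)] by simp
    finally show "cpow B g (x \<otimes>\<^bsub>integer_mod_group (p ^ N)\<^esub> y) = cpow B g x \<otimes>\<^bsub>B\<^esub> cpow B g y"
      by simp
  qed
  have o: "group.ord B g = p ^ N" by (rule ord_pN[OF assms])
  have inj: "inj_on (\<lambda>x. g [^]\<^bsub>B\<^esub> (x::nat)) {0..p ^ N - 1}"
    using group.ord_inj[OF gB g(1)] o by simp
  show "inj_on (cpow B g) (carrier (integer_mod_group (p ^ N)))"
  proof (rule inj_onI)
    fix x y assume x: "x \<in> carrier (integer_mod_group (p ^ N))" and y: "y \<in> carrier (integer_mod_group (p ^ N))"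
      and e: "cpow B g x = cpow B g y"
    have "nat x < p ^ N" "nat y < p ^ N" using x y ca by (auto simp: nat_less_iff)
    then have "nat x \<in> {0..p ^ N - 1}" "nat y \<in> {0..p ^ N - 1}" by auto
    then have "nat x = nat y" using inj e unfolding cpow_def by (auto dest: inj_onD)
    then show "x = y" using x y ca by auto
  qed
qed

lemma cyc_iso:
  assumes gB: "group B" and p: "Factorial_Ring.prime p" and N: "0 < N" and g: "g \<in> carrier B"
    "g [^]\<^bsub>B\<^esub> (p ^ N) = \<one>\<^bsub>B\<^esub>" "g [^]\<^bsub>B\<^esub> (p ^ (N - 1)) \<noteq> \<one>\<^bsub>B\<^esub>"
  defines "H \<equiv> cpow B g ` carrier (integer_mod_group (p ^ N))"
  shows "subgroup H B" "cpow B g \<in> iso (integer_mod_group (p ^ N)) (B\<lparr>carrier := H\<rparr>)"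
    "card H = p ^ N"
proof -
  have h: "cpow B g \<in> hom (integer_mod_group (p ^ N)) B" and i: "inj_on (cpow B g) (carrier (integer_mod_group (p ^ N)))"
    using cyc_hom[OF assms(1-6)] by auto
  have gh: "group_hom (integer_mod_group (p ^ N)) B (cpow B g)"
    using h gB by (simp add: group_hom_def group_hom_axioms_def)
  show "subgroup H B" unfolding H_def by (rule group_hom.img_is_subgroup[OF gh])
  show "cpow B g \<in> iso (integer_mod_group (p ^ N)) (B\<lparr>carrier := H\<rparr>)"
    using h i unfolding iso_def hom_def H_def bij_betw_def by auto
  have pN: "0 < p ^ N" using p by (simp add: prime_gt_0_nat)
  show "card H = p ^ N" unfolding H_def using card_image[OF i] pN by (simp add: carrier_integer_mod_group)
qed

lemma dp_pow:
  assumes "monoid A" "monoid B" "x \<in> carrier A" "y \<in> carrier B"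
  shows "(x, y) [^]\<^bsub>A \<times>\<times> B\<^esub> (n::nat) = (x [^]\<^bsub>A\<^esub> n, y [^]\<^bsub>B\<^esub> n)"
proof (induction n)
  case 0 then show ?case using DirProd_monoid[OF assms(1,2)] by (simp add: monoid.nat_pow_0 assms)
next
  case (Suc n) then show ?case using DirProd_monoid[OF assms(1,2)] assms by (simp add: monoid.nat_pow_Suc)
qed

lemma sub_comm: "comm_group M \<Longrightarrow> subgroup D M \<Longrightarrow> comm_group (M\<lparr>carrier := D\<rparr>)"
  by (rule group.group_comm_groupI)
     (auto simp: comm_group_def subgroup.subgroup_is_group comm_monoid.m_comm subgroup.mem_carrier)

lemma sub_ap_len:
  assumes cM: "comm_group M" and D: "subgroup D M" and N: "0 < N"
    and all: "\<forall>x\<in>carrier M. x [^]\<^bsub>M\<^esub> (p ^ N) = \<one>\<^bsub>M\<^esub>"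
    and g: "g \<in> D" "g [^]\<^bsub>M\<^esub> (p ^ (N - 1)) \<noteq> \<one>\<^bsub>M\<^esub>"
  shows "abelian_p_group p (M\<lparr>carrier := D\<rparr>)" "has_length p (M\<lparr>carrier := D\<rparr>) N"
proof -
  have gM: "group M" using cM by (simp add: comm_group_def)
  have mM: "monoid M" using gM by (rule group.is_monoid)
  have cD: "comm_group (M\<lparr>carrier := D\<rparr>)" by (rule sub_comm[OF cM D])
  have gD: "group (M\<lparr>carrier := D\<rparr>)" using cD by (simp add: comm_group_def)
  have pw: "x [^]\<^bsub>M\<lparr>carrier := D\<rparr>\<^esub> (n::nat) = x [^]\<^bsub>M\<^esub> n" for x n
    using monoid.nat_pow_consistent[OF mM] by simp
  have sub: "D \<subseteq> carrier M" using D by (rule subgroup.subset)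
  show "abelian_p_group p (M\<lparr>carrier := D\<rparr>)"
    unfolding abelian_p_group_def using cD all sub pw by auto
  show "has_length p (M\<lparr>carrier := D\<rparr>) N"
    by (rule crit[OF gD N]) (use all sub pw g in auto)
qed

lemma emb_iso:
  assumes gC: "group C" and H: "subgroup H C"
  shows "(\<lambda>x. (x, \<one>\<^bsub>C\<^esub>)) \<in> iso (C\<lparr>carrier := H\<rparr>) ((C \<times>\<times> C)\<lparr>carrier := H \<times> {\<one>\<^bsub>C\<^esub>}\<rparr>)"
proof -
  have mC: "monoid C" using gC by (rule group.is_monoid)
  have "\<one>\<^bsub>C\<^esub> \<otimes>\<^bsub>C\<^esub> \<one>\<^bsub>C\<^esub> = \<one>\<^bsub>C\<^esub>" using mC by (simp add: monoid.l_one monoid.one_closed)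
  then show ?thesis unfolding iso_def hom_def bij_betw_def inj_on_def by auto
qed

lemma restr_iso:
  assumes "b \<in> iso M G" "D \<subseteq> carrier M"
  shows "b \<in> iso (M\<lparr>carrier := D\<rparr>) (G\<lparr>carrier := b ` D\<rparr>)"
  using assms unfolding iso_def hom_def bij_betw_def by (auto intro: inj_on_subset) (meson subsetD)

lemma nat_copy:
  assumes gM: "group M" and fin: "finite (carrier M)"
  shows "\<exists>b (G :: nat monoid). b \<in> iso M G \<and> carrier G = {0..<card (carrier M)} \<and> group G"
proof -
  obtain b where b: "bij_betw b (carrier M) {0..<card (carrier M)}" using ex_bij_betw_finite_nat[OF fin] by blast
  define G :: "nat monoid" where "G = \<lparr>carrier = {0..<card (carrier M)},
    monoid.mult = (\<lambda>x y. b (inv_into (carrier M) b x \<otimes>\<^bsub>M\<^esub> inv_into (carrier M) b y)), one = b \<one>\<^bsub>M\<^esub>\<rparr>"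
  have inj: "inj_on b (carrier M)" using b by (simp add: bij_betw_def)
  have "b \<in> hom M G" unfolding hom_def
  proof (intro CollectI conjI ballI)
    show "b \<in> carrier M \<rightarrow> carrier G" using b by (auto simp: G_def bij_betw_def)
    fix x y assume "x \<in> carrier M" "y \<in> carrier M"
    then show "b (x \<otimes>\<^bsub>M\<^esub> y) = b x \<otimes>\<^bsub>G\<^esub> b y" using inj by (simp add: G_def inv_into_f_f)
  qed
  then have bi: "b \<in> iso M G" using b by (simp add: iso_def G_def)
  have "group (G\<lparr>one := b \<one>\<^bsub>M\<^esub>\<rparr>)" by (rule group.iso_imp_img_group[OF gM bi])
  moreover have "G\<lparr>one := b \<one>\<^bsub>M\<^esub>\<rparr> = G" by (simp add: G_def)
  ultimately show ?thesis using bi by (intro exI[of _ b] exI[of _ G]) (simp add: G_def)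
qed


fun exq :: "nat \<Rightarrow> fm \<Rightarrow> fm" where
  "exq 0 \<phi> = \<phi>" | "exq (Suc k) \<phi> = FEx k (exq k \<phi>)"

fun alq :: "nat \<Rightarrow> fm \<Rightarrow> fm" where
  "alq 0 \<phi> = \<phi>" | "alq (Suc k) \<phi> = FAll k (alq k \<phi>)"

fun bigAnd :: "fm list \<Rightarrow> fm" where
  "bigAnd [] = FEq TOne TOne" | "bigAnd (\<phi> # \<phi>s) = FAnd \<phi> (bigAnd \<phi>s)"

fun bigOr :: "fm list \<Rightarrow> fm" where
  "bigOr [] = FNot (FEq TOne TOne)" | "bigOr (\<phi> # \<phi>s) = FOr \<phi> (bigOr \<phi>s)"

lemma sat_bigAnd: "sat M e (bigAnd \<phi>s) \<longleftrightarrow> (\<forall>\<phi>\<in>set \<phi>s. sat M e \<phi>)"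
  by (induction \<phi>s) auto

lemma sat_bigOr: "sat M e (bigOr \<phi>s) \<longleftrightarrow> (\<exists>\<phi>\<in>set \<phi>s. sat M e \<phi>)"
  by (induction \<phi>s) auto

lemma qfree_bigAnd: "\<forall>\<phi>\<in>set \<phi>s. qfree \<phi> \<Longrightarrow> qfree (bigAnd \<phi>s)"
  by (induction \<phi>s) auto

lemma qfree_bigOr: "\<forall>\<phi>\<in>set \<phi>s. qfree \<phi> \<Longrightarrow> qfree (bigOr \<phi>s)"
  by (induction \<phi>s) auto

lemma fv_bigAnd: "fv (bigAnd \<phi>s) = \<Union> (fv ` set \<phi>s)"
  by (induction \<phi>s) auto

lemma fv_bigOr: "fv (bigOr \<phi>s) = \<Union> (fv ` set \<phi>s)"
  by (induction \<phi>s) auto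

lemma fv_exq: "fv (exq k \<phi>) = fv \<phi> - {..<k}"
  by (induction k) (auto simp: lessThan_Suc)

lemma fv_alq: "fv (alq k \<phi>) = fv \<phi> - {..<k}"
  by (induction k) (auto simp: lessThan_Suc)

lemma existential_exq: "qfree \<phi> \<Longrightarrow> existential (exq k \<phi>)"
proof (induction k)
  case 0 then show ?case by (cases \<phi>) auto
next
  case (Suc k) then show ?case by simp
qed

lemma universal_alq: "qfree \<phi> \<Longrightarrow> universal (alq k \<phi>)"
proof (induction k)
  case 0 then show ?case by (cases \<phi>) auto
next
  case (Suc k) then show ?case by simp
qed

lemma sat_exq: "sat M e (exq k \<phi>) \<longleftrightarrow> (\<exists>f. (\<forall>i<k. f i \<in> carrier M) \<and> sat M (\<lambda>v. if v < k then f v else e v) \<phi>)"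
proof (induction k arbitrary: e)
  case 0 then show ?case by simp
next
  case (Suc k)
  have eqf: "(\<lambda>v. if v < k then f v else (e(k := a)) v) = (\<lambda>v. if v < Suc k then (f(k := a)) v else e v)" for f a
    by (auto simp: fun_eq_iff less_Suc_eq)
  show ?case
  proof
    assume "sat M e (exq (Suc k) \<phi>)"
    then obtain a f where a: "a \<in> carrier M" and f: "\<forall>i<k. f i \<in> carrier M"
      and s: "sat M (\<lambda>v. if v < k then f v else (e(k := a)) v) \<phi>" using Suc by auto
    show "\<exists>f. (\<forall>i<Suc k. f i \<in> carrier M) \<and> sat M (\<lambda>v. if v < Suc k then f v else e v) \<phi>"
      using a f s unfolding eqf by (intro exI[of _ "f(k := a)"]) (auto simp: less_Suc_eq)
  next
    assume "\<exists>f. (\<forall>i<Suc k. f i \<in> carrier M) \<and> sat M (\<lambda>v. if v < Suc k then f v else e v) \<phi>"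
    then obtain f where f: "\<forall>i<Suc k. f i \<in> carrier M" and s: "sat M (\<lambda>v. if v < Suc k then f v else e v) \<phi>" by blast
    have e2: "(\<lambda>v. if v < k then f v else (e(k := f k)) v) = (\<lambda>v. if v < Suc k then f v else e v)"
      by (auto simp: fun_eq_iff less_Suc_eq)
    then have "sat M (\<lambda>v. if v < k then f v else (e(k := f k)) v) \<phi>" using s by simp
    moreover have "f k \<in> carrier M" "\<forall>i<k. f i \<in> carrier M" using f by auto
    ultimately show "sat M e (exq (Suc k) \<phi>)" using Suc by auto
  qed
qed

lemma sat_alq: "sat M e (alq k \<phi>) \<longleftrightarrow> (\<forall>f. (\<forall>i<k. f i \<in> carrier M) \<longrightarrow> sat M (\<lambda>v. if v < k then f v else e v) \<phi>)"
proof (induction k arbitrary: e)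
  case 0 then show ?case by simp
next
  case (Suc k)
  have eqf: "(\<lambda>v. if v < k then f v else (e(k := a)) v) = (\<lambda>v. if v < Suc k then (f(k := a)) v else e v)" for f a
    by (auto simp: fun_eq_iff less_Suc_eq)
  show ?case
  proof
    assume A: "sat M e (alq (Suc k) \<phi>)"
    show "\<forall>f. (\<forall>i<Suc k. f i \<in> carrier M) \<longrightarrow> sat M (\<lambda>v. if v < Suc k then f v else e v) \<phi>"
    proof (intro allI impI)
      fix f assume f: "\<forall>i<Suc k. f i \<in> carrier M"
      then have "sat M (\<lambda>v. if v < k then f v else (e(k := f k)) v) \<phi>" using A Suc by auto
      moreover have "(\<lambda>v. if v < k then f v else (e(k := f k)) v) = (\<lambda>v. if v < Suc k then f v else e v)"
        by (auto simp: fun_eq_iff less_Suc_eq)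
      ultimately show "sat M (\<lambda>v. if v < Suc k then f v else e v) \<phi>" by simp
    qed
  next
    assume A: "\<forall>f. (\<forall>i<Suc k. f i \<in> carrier M) \<longrightarrow> sat M (\<lambda>v. if v < Suc k then f v else e v) \<phi>"
    have "sat M (\<lambda>v. if v < k then f v else (e(k := a)) v) \<phi>" if "a \<in> carrier M" "\<forall>i<k. f i \<in> carrier M" for a f
    proof -
      have "\<forall>i<Suc k. (f(k := a)) i \<in> carrier M" using that by (auto simp: less_Suc_eq)
      then show ?thesis using A unfolding eqf by blast
    qed
    then show "sat M e (alq (Suc k) \<phi>)" using Suc by auto
  qed
qed

definition atmost :: "nat \<Rightarrow> fm" where
  "atmost c = alq (Suc c) (bigOr [FEq (TVar i) (TVar j). i \<leftarrow> [0..<Suc c], j \<leftarrow> [0..<Suc c], i < j])"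

lemma set_pairs: "set [FEq (TVar i) (TVar j). i \<leftarrow> [0..<Suc c], j \<leftarrow> [0..<Suc c], i < j]
   = {FEq (TVar i) (TVar j) | i j. i < j \<and> j < Suc c}"
  apply auto
  apply (rule_tac x=i in bexI)
   apply auto
  done

lemma atmost_props: "universal (atmost c) \<and> sentence (atmost c)"
proof
  show "universal (atmost c)" unfolding atmost_def
    by (rule universal_alq, rule qfree_bigOr) (simp only: set_pairs, auto)
  have "fv (bigOr [FEq (TVar i) (TVar j). i \<leftarrow> [0..<Suc c], j \<leftarrow> [0..<Suc c], i < j]) \<subseteq> {..<Suc c}"
    unfolding fv_bigOr set_pairs by auto
  then show "sentence (atmost c)" unfolding atmost_def sentence_def fv_alq by blast
qed

lemma sat_atmost: "models M (atmost c) \<longleftrightarrow> (\<forall>f. (\<forall>i<Suc c. f i \<in> carrier M) \<longrightarrow> (\<exists>i j. i < j \<and> j < Suc c \<and> f i = f j))"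
proof -
  have h1: "sat M e (bigOr [FEq (TVar i) (TVar j). i \<leftarrow> [0..<Suc c], j \<leftarrow> [0..<Suc c], i < j])
     \<longleftrightarrow> (\<exists>i j. i < j \<and> j < Suc c \<and> e i = e j)" for e
    unfolding sat_bigOr set_pairs
  proof
    assume "\<exists>\<phi>\<in>{FEq (TVar i) (TVar j) |i j. i < j \<and> j < Suc c}. sat M e \<phi>"
    then show "\<exists>i j. i < j \<and> j < Suc c \<and> e i = e j" by auto blast
  next
    assume "\<exists>i j. i < j \<and> j < Suc c \<and> e i = e j"
    then obtain i j where "i < j" "j < Suc c" "e i = e j" by blast
    then show "\<exists>\<phi>\<in>{FEq (TVar i) (TVar j) |i j. i < j \<and> j < Suc c}. sat M e \<phi>"
      by (intro bexI[of _ "FEq (TVar i) (TVar j)"]) auto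
  qed
  have h2: "(\<exists>i j. i < j \<and> j < Suc c \<and> (if i < Suc c then f i else \<one>\<^bsub>M\<^esub>) = (if j < Suc c then f j else \<one>\<^bsub>M\<^esub>))
    \<longleftrightarrow> (\<exists>i j. i < j \<and> j < Suc c \<and> f i = f j)" for f
    by (metis (no_types, lifting) order.strict_trans)
  show ?thesis unfolding atmost_def models_def sat_alq h1 h2 ..
qed

lemma atmost_card: "models M (atmost c) \<longleftrightarrow> finite (carrier M) \<and> card (carrier M) \<le> c"
proof
  assume A: "models M (atmost c)"
  show "finite (carrier M) \<and> card (carrier M) \<le> c"
  proof (rule ccontr)
    assume nt: "\<not> (finite (carrier M) \<and> card (carrier M) \<le> c)"
    then obtain B where B: "finite B" "card B = Suc c" "B \<subseteq> carrier M"
    proof (cases "finite (carrier M)")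
      case True
      then have "Suc c \<le> card (carrier M)" using nt by simp
      then obtain B where "B \<subseteq> carrier M" "card B = Suc c" using obtain_subset_with_card_n by metis
      then show ?thesis using that True finite_subset by blast
    next
      case False
      then show ?thesis using that infinite_arbitrarily_large by blast
    qed
    obtain f where f: "bij_betw f {0..<Suc c} B" using ex_bij_betw_nat_finite[OF B(1)] B(2) by metis
    have "\<forall>i<Suc c. f i \<in> carrier M" using f B(3) by (auto simp: bij_betw_def)
    then obtain i j where "i < j" "j < Suc c" "f i = f j" using A sat_atmost by blast
    then show False using f unfolding bij_betw_def inj_on_def
      by (metis atLeastLessThan_iff less_irrefl zero_le less_trans)
  qed
next
  assume A: "finite (carrier M) \<and> card (carrier M) \<le> c"
  show "models M (atmost c)" unfolding sat_atmost
  proof (intro allI impI)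
    fix f assume f: "\<forall>i<Suc c. f i \<in> carrier M"
    show "\<exists>i j. i < j \<and> j < Suc c \<and> f i = f j"
    proof (rule ccontr)
      assume "\<not> ?thesis"
      then have "inj_on f {0..<Suc c}" unfolding inj_on_def by (metis atLeastLessThan_iff linorder_neqE_nat)
      then have "card (f ` {0..<Suc c}) = Suc c" by (simp add: card_image)
      moreover have "f ` {0..<Suc c} \<subseteq> carrier M" using f by auto
      ultimately have "Suc c \<le> card (carrier M)" using A card_mono by metis
      then show False using A by simp
    qed
  qed
qed


lemma struct_iso_sym:
  assumes "struct_iso A B" "\<forall>x\<in>carrier A. \<forall>y\<in>carrier A. x \<otimes>\<^bsub>A\<^esub> y \<in> carrier A" "\<one>\<^bsub>A\<^esub> \<in> carrier A"
  shows "struct_iso B A"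
proof -
  obtain h where h: "bij_betw h (carrier A) (carrier B)" "h \<one>\<^bsub>A\<^esub> = \<one>\<^bsub>B\<^esub>"
    "\<forall>x\<in>carrier A. \<forall>y\<in>carrier A. h (x \<otimes>\<^bsub>A\<^esub> y) = h x \<otimes>\<^bsub>B\<^esub> h y"
    using assms(1) unfolding struct_iso_def by blast
  let ?g = "inv_into (carrier A) h"
  have inj: "inj_on h (carrier A)" using h(1) by (simp add: bij_betw_def)
  have "bij_betw ?g (carrier B) (carrier A)" by (rule bij_betw_inv_into[OF h(1)])
  moreover have "?g \<one>\<^bsub>B\<^esub> = \<one>\<^bsub>A\<^esub>" using h(2) inv_into_f_f[OF inj assms(3)] by simp
  moreover have "?g (u \<otimes>\<^bsub>B\<^esub> v) = ?g u \<otimes>\<^bsub>A\<^esub> ?g v" if u: "u \<in> carrier B" and v: "v \<in> carrier B" for u v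
  proof -
    have surj: "h ` carrier A = carrier B" using h(1) by (simp add: bij_betw_def)
    obtain x where x: "x \<in> carrier A" "u = h x" using u surj by blast
    obtain y where y: "y \<in> carrier A" "v = h y" using v surj by blast
    have "u \<otimes>\<^bsub>B\<^esub> v = h (x \<otimes>\<^bsub>A\<^esub> y)" using h(3) x y by simp
    then have "?g (u \<otimes>\<^bsub>B\<^esub> v) = x \<otimes>\<^bsub>A\<^esub> y" using inv_into_f_f[OF inj] assms(2) x y by simp
    then show ?thesis using inv_into_f_f[OF inj] x y by simp
  qed
  ultimately show ?thesis unfolding struct_iso_def by blast
qed

lemma iso_struct: "group A \<Longrightarrow> group B \<Longrightarrow> A \<cong> B \<Longrightarrow> struct_iso A B"
proof -
  assume gA: "group A" and gB: "group B" and "A \<cong> B"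
  then obtain h where h: "h \<in> iso A B" unfolding is_iso_def by blast
  then have "h \<in> hom A B" "bij_betw h (carrier A) (carrier B)" by (auto simp: iso_def)
  moreover have "h \<one>\<^bsub>A\<^esub> = \<one>\<^bsub>B\<^esub>" using hom_one[OF _ gA gB] h by (auto simp: iso_def)
  ultimately show ?thesis unfolding struct_iso_def hom_def by blast
qed

lemma struct_iso_card: "struct_iso A B \<Longrightarrow> card (carrier A) = card (carrier B) \<and> (finite (carrier A) \<longleftrightarrow> finite (carrier B))"
  unfolding struct_iso_def by (meson bij_betw_finite bij_betw_same_card)

definition dg :: "nat \<Rightarrow> (nat \<Rightarrow> nat \<Rightarrow> nat) \<Rightarrow> nat \<Rightarrow> fm" where
  "dg c t u = exq c (bigAnd ([FNot (FEq (TVar i) (TVar j)). i \<leftarrow> [0..<c], j \<leftarrow> [0..<c], i \<noteq> j] @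
      [FEq (TMul (TVar i) (TVar j)) (TVar (t i j)). i \<leftarrow> [0..<c], j \<leftarrow> [0..<c]] @ [FEq (TVar u) TOne]))"

lemma dg_props:
  assumes "\<forall>i<c. \<forall>j<c. t i j < c" "u < c"
  shows "existential (dg c t u) \<and> sentence (dg c t u)"
proof
  show "existential (dg c t u)" unfolding dg_def
    by (rule existential_exq, rule qfree_bigAnd) auto
  have "fv (bigAnd ([FNot (FEq (TVar i) (TVar j)). i \<leftarrow> [0..<c], j \<leftarrow> [0..<c], i \<noteq> j] @
      [FEq (TMul (TVar i) (TVar j)) (TVar (t i j)). i \<leftarrow> [0..<c], j \<leftarrow> [0..<c]] @ [FEq (TVar u) TOne])) \<subseteq> {..<c}"
    unfolding fv_bigAnd using assms by auto
  then show "sentence (dg c t u)" unfolding dg_def sentence_def fv_exq by blast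
qed

lemma sat_dg:
  assumes "\<forall>i<c. \<forall>j<c. t i j < c" "u < c"
  shows "models M (dg c t u) \<longleftrightarrow> (\<exists>f. (\<forall>i<c. f i \<in> carrier M) \<and> inj_on f {0..<c} \<and>
     (\<forall>i<c. \<forall>j<c. f i \<otimes>\<^bsub>M\<^esub> f j = f (t i j)) \<and> f u = \<one>\<^bsub>M\<^esub>)"
proof -
  have "sat M (\<lambda>v. if v < c then f v else \<one>\<^bsub>M\<^esub>) (bigAnd ([FNot (FEq (TVar i) (TVar j)). i \<leftarrow> [0..<c], j \<leftarrow> [0..<c], i \<noteq> j] @
      [FEq (TMul (TVar i) (TVar j)) (TVar (t i j)). i \<leftarrow> [0..<c], j \<leftarrow> [0..<c]] @ [FEq (TVar u) TOne]))
    \<longleftrightarrow> inj_on f {0..<c} \<and> (\<forall>i<c. \<forall>j<c. f i \<otimes>\<^bsub>M\<^esub> f j = f (t i j)) \<and> f u = \<one>\<^bsub>M\<^esub>" for f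
  proof -
    let ?e = "\<lambda>v. if v < c then f v else \<one>\<^bsub>M\<^esub>"
    have s1: "set [FNot (FEq (TVar i) (TVar j)). i \<leftarrow> [0..<c], j \<leftarrow> [0..<c], i \<noteq> j]
       = {FNot (FEq (TVar i) (TVar j)) | i j. i < c \<and> j < c \<and> i \<noteq> j}" by auto
    have s2: "set [FEq (TMul (TVar i) (TVar j)) (TVar (t i j)). i \<leftarrow> [0..<c], j \<leftarrow> [0..<c]]
       = {FEq (TMul (TVar i) (TVar j)) (TVar (t i j)) | i j. i < c \<and> j < c}" by auto
    have a1: "(\<forall>\<phi>\<in>{FNot (FEq (TVar i) (TVar j)) | i j. i < c \<and> j < c \<and> i \<noteq> j}. sat M ?e \<phi>)
       \<longleftrightarrow> inj_on f {0..<c}"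
    proof
      assume A: "\<forall>\<phi>\<in>{FNot (FEq (TVar i) (TVar j)) | i j. i < c \<and> j < c \<and> i \<noteq> j}. sat M ?e \<phi>"
      show "inj_on f {0..<c}"
      proof (rule inj_onI, rule ccontr)
        fix x y assume "x \<in> {0..<c}" "y \<in> {0..<c}" "f x = f y" "x \<noteq> y"
        then have "FNot (FEq (TVar x) (TVar y)) \<in> {FNot (FEq (TVar i) (TVar j)) | i j. i < c \<and> j < c \<and> i \<noteq> j}"
          by auto
        then have "sat M ?e (FNot (FEq (TVar x) (TVar y)))" using A by blast
        then show False using \<open>x \<in> {0..<c}\<close> \<open>y \<in> {0..<c}\<close> \<open>f x = f y\<close> by simp
      qed
    qed (auto simp: inj_on_def)
    have a2: "(\<forall>\<phi>\<in>{FEq (TMul (TVar i) (TVar j)) (TVar (t i j)) | i j. i < c \<and> j < c}. sat M ?e \<phi>)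
       \<longleftrightarrow> (\<forall>i<c. \<forall>j<c. f i \<otimes>\<^bsub>M\<^esub> f j = f (t i j))"
    proof
      assume A: "\<forall>\<phi>\<in>{FEq (TMul (TVar i) (TVar j)) (TVar (t i j)) | i j. i < c \<and> j < c}. sat M ?e \<phi>"
      show "\<forall>i<c. \<forall>j<c. f i \<otimes>\<^bsub>M\<^esub> f j = f (t i j)"
      proof (intro allI impI)
        fix i j assume ij: "i < c" "j < c"
        then have "sat M ?e (FEq (TMul (TVar i) (TVar j)) (TVar (t i j)))" using A by blast
        then show "f i \<otimes>\<^bsub>M\<^esub> f j = f (t i j)" using ij assms(1) by simp
      qed
    qed (use assms(1) in auto)
    have a3: "sat M ?e (FEq (TVar u) TOne) \<longleftrightarrow> f u = \<one>\<^bsub>M\<^esub>" using assms(2) by simp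
    show ?thesis unfolding sat_bigAnd set_append s1 s2 ball_Un a1 a2 using a3 by simp
  qed
  then show ?thesis unfolding dg_def models_def sat_exq by auto
qed


lemma models_FAnd: "models M (FAnd a b) \<longleftrightarrow> models M a \<and> models M b"
  by (simp add: models_def)

lemma scott2:
  assumes gC: "group C" and fin: "finite (carrier C)"
  shows "\<exists>\<phi>. dce_sentence \<phi> \<and> scott_sentence_within (\<lambda>M. True) C \<phi>"
proof -
  define c where "c = card (carrier C)"
  obtain el where el: "bij_betw el {0..<c} (carrier C)" using ex_bij_betw_nat_finite[OF fin] c_def by blast
  define ix where "ix = inv_into {0..<c} el"
  have ixb: "bij_betw ix (carrier C) {0..<c}" unfolding ix_def by (rule bij_betw_inv_into[OF el])
  have elix: "el (ix z) = z" if "z \<in> carrier C" for z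
    using that el unfolding ix_def by (simp add: bij_betw_def f_inv_into_f)
  have ixel: "ix (el i) = i" if "i < c" for i
    using that el unfolding ix_def by (simp add: bij_betw_def inv_into_f_f)
  have elc: "el i \<in> carrier C" if "i < c" for i using that el by (auto simp: bij_betw_def)
  have ixc: "ix z < c" if "z \<in> carrier C" for z using that ixb by (auto simp: bij_betw_def)
  have mC: "monoid C" using gC by (rule group.is_monoid)
  have cl: "\<forall>x\<in>carrier C. \<forall>y\<in>carrier C. x \<otimes>\<^bsub>C\<^esub> y \<in> carrier C" using monoid.m_closed[OF mC] by blast
  have oc: "\<one>\<^bsub>C\<^esub> \<in> carrier C" using monoid.one_closed[OF mC] .
  define t where "t i j = ix (el i \<otimes>\<^bsub>C\<^esub> el j)" for i j
  define u where "u = ix \<one>\<^bsub>C\<^esub>"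
  have tc: "\<forall>i<c. \<forall>j<c. t i j < c" unfolding t_def using ixc cl elc by blast
  have uc: "u < c" unfolding u_def using ixc oc by blast
  define \<phi> where "\<phi> = FAnd (dg c t u) (atmost c)"
  have dce: "dce_sentence \<phi>" unfolding \<phi>_def dce_sentence_def
    using dg_props[OF tc uc] atmost_props by blast
  have sen: "sentence \<phi>" using dg_props[OF tc uc] atmost_props unfolding \<phi>_def sentence_def by simp
  have "models M \<phi> \<longleftrightarrow> struct_iso M C" if LM: "L_structure M" for M :: "nat monoid"
  proof
    assume "models M \<phi>"
    then have m1: "models M (dg c t u)" and m2: "models M (atmost c)" unfolding \<phi>_def models_FAnd by auto
    obtain f where f: "\<forall>i<c. f i \<in> carrier M" "inj_on f {0..<c}"
      "\<forall>i<c. \<forall>j<c. f i \<otimes>\<^bsub>M\<^esub> f j = f (t i j)" "f u = \<one>\<^bsub>M\<^esub>" using m1 sat_dg[OF tc uc] by blast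
    have fM: "finite (carrier M)" "card (carrier M) \<le> c" using m2 atmost_card by auto
    have sub: "f ` {0..<c} \<subseteq> carrier M" using f(1) by auto
    have "card (f ` {0..<c}) = c" using f(2) by (simp add: card_image)
    then have eqM: "f ` {0..<c} = carrier M" using card_subset_eq[OF fM(1) sub] fM(2) card_mono[OF fM(1) sub] by simp
    have fb: "bij_betw f {0..<c} (carrier M)" using f(2) eqM by (simp add: bij_betw_def)
    have hb: "bij_betw (f \<circ> ix) (carrier C) (carrier M)" by (rule bij_betw_trans[OF ixb fb])
    have "struct_iso C M" unfolding struct_iso_def
    proof (intro exI conjI)
      show "bij_betw (f \<circ> ix) (carrier C) (carrier M)" by (rule hb)
      show "(f \<circ> ix) \<one>\<^bsub>C\<^esub> = \<one>\<^bsub>M\<^esub>" using f(4) by (simp add: u_def)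
      show "\<forall>x\<in>carrier C. \<forall>y\<in>carrier C. (f \<circ> ix) (x \<otimes>\<^bsub>C\<^esub> y) = (f \<circ> ix) x \<otimes>\<^bsub>M\<^esub> (f \<circ> ix) y"
      proof (intro ballI)
        fix x y assume x: "x \<in> carrier C" and y: "y \<in> carrier C"
        have "t (ix x) (ix y) = ix (x \<otimes>\<^bsub>C\<^esub> y)" unfolding t_def using elix x y by simp
        then show "(f \<circ> ix) (x \<otimes>\<^bsub>C\<^esub> y) = (f \<circ> ix) x \<otimes>\<^bsub>M\<^esub> (f \<circ> ix) y"
          using f(3) ixc[OF x] ixc[OF y] by simp
      qed
    qed
    then show "struct_iso M C" using struct_iso_sym cl oc by blast
  next
    assume si: "struct_iso M C"
    have clM: "\<forall>x\<in>carrier M. \<forall>y\<in>carrier M. x \<otimes>\<^bsub>M\<^esub> y \<in> carrier M" "\<one>\<^bsub>M\<^esub> \<in> carrier M"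
      using LM unfolding L_structure_def by auto
    obtain k where k: "bij_betw k (carrier C) (carrier M)" "k \<one>\<^bsub>C\<^esub> = \<one>\<^bsub>M\<^esub>"
      "\<forall>x\<in>carrier C. \<forall>y\<in>carrier C. k (x \<otimes>\<^bsub>C\<^esub> y) = k x \<otimes>\<^bsub>M\<^esub> k y"
      using struct_iso_sym[OF si clM] unfolding struct_iso_def by blast
    define f where "f = k \<circ> el"
    have fb: "bij_betw f {0..<c} (carrier M)" unfolding f_def by (rule bij_betw_trans[OF el k(1)])
    have "models M (dg c t u)" unfolding sat_dg[OF tc uc]
    proof (intro exI conjI)
      show "\<forall>i<c. f i \<in> carrier M" using fb by (auto simp: bij_betw_def)
      show "inj_on f {0..<c}" using fb by (simp add: bij_betw_def)
      show "\<forall>i<c. \<forall>j<c. f i \<otimes>\<^bsub>M\<^esub> f j = f (t i j)"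
        unfolding f_def t_def using k(3) elc elix cl by simp
      show "f u = \<one>\<^bsub>M\<^esub>" unfolding f_def u_def using elix oc k(2) by simp
    qed
    moreover have "models M (atmost c)" unfolding atmost_card
      using struct_iso_card[OF si] fin c_def by simp
    ultimately show "models M \<phi>" unfolding \<phi>_def models_FAnd by simp
  qed
  then have "scott_sentence_within (\<lambda>M. True) C \<phi>" unfolding scott_sentence_within_def using sen by blast
  then show ?thesis using dce by blast
qed

lemma card_Zp: "0 < n \<Longrightarrow> card (carrier (integer_mod_group n)) = n"
  by (simp add: carrier_integer_mod_group)

lemma scott1:
  assumes p: "Factorial_Ring.prime p" and ap: "abelian_p_group p C" and fin: "finite (carrier C)"
    and nt: "carrier C \<noteq> {\<one>\<^bsub>C\<^esub>}" and hl: "has_length p C N"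
    and cyc: "C \<cong> integer_mod_group (p ^ N)"
  shows "\<exists>\<phi>. universal \<phi> \<and> scott_sentence_within (\<lambda>M. abelian_p_group p M \<and> has_length p M N) C \<phi>"
proof -
  have gC: "group C" using ap by (simp add: abelian_p_group_def comm_group_def)
  have N: "0 < N" using crit_conv[OF ap fin hl nt] by blast
  have pN: "0 < p ^ N" using p by (simp add: prime_gt_0_nat)
  have cardC: "card (carrier C) = p ^ N"
  proof -
    obtain h where "h \<in> iso C (integer_mod_group (p ^ N))" using cyc unfolding is_iso_def by blast
    then have "bij_betw h (carrier C) (carrier (integer_mod_group (p ^ N)))" by (simp add: iso_def)
    then show ?thesis using card_Zp[OF pN] bij_betw_same_card by metis
  qed
  have "models M (atmost (p ^ N)) \<longleftrightarrow> struct_iso M C"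
    if LM: "L_structure M" and K: "abelian_p_group p M \<and> has_length p M N" for M :: "nat monoid"
  proof
    assume "models M (atmost (p ^ N))"
    then have fM: "finite (carrier M)" "card (carrier M) \<le> p ^ N" using atmost_card by auto
    have gM: "group M" using K by (simp add: abelian_p_group_def comm_group_def)
    have mM: "monoid M" using gM by (rule group.is_monoid)
    have ntM: "carrier M \<noteq> {\<one>\<^bsub>M\<^esub>}"
    proof
      assume triv: "carrier M = {\<one>\<^bsub>M\<^esub>}"
      then have "p_layer p M k = {\<one>\<^bsub>M\<^esub>}" for k unfolding p_layer_def using monoid.nat_pow_one[OF mM] by simp
      then show False using K N unfolding has_length_def by auto
    qed
    obtain g where g: "g \<in> carrier M" "g [^]\<^bsub>M\<^esub> (p ^ (N - 1)) \<noteq> \<one>\<^bsub>M\<^esub>" and gN: "g [^]\<^bsub>M\<^esub> (p ^ N) = \<one>\<^bsub>M\<^esub>"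
      using crit_conv[OF _ fM(1) _ ntM] K by blast
    define H where "H = cpow M g ` carrier (integer_mod_group (p ^ N))"
    have Hs: "subgroup H M" and Hi: "cpow M g \<in> iso (integer_mod_group (p ^ N)) (M\<lparr>carrier := H\<rparr>)"
      and Hc: "card H = p ^ N" using cyc_iso[OF gM p N g(1) gN g(2)] unfolding H_def by auto
    have HM: "H \<subseteq> carrier M" using Hs by (rule subgroup.subset)
    have "H = carrier M" using card_subset_eq[OF fM(1) HM] Hc fM(2) card_mono[OF fM(1) HM] by simp
    then have "integer_mod_group (p ^ N) \<cong> M" using Hi unfolding is_iso_def by auto
    then have "C \<cong> M" using cyc iso_trans by blast
    then have "M \<cong> C" using group.iso_sym[OF gC] by blast
    then show "struct_iso M C" using iso_struct[OF gM gC] by blast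
  next
    assume si: "struct_iso M C"
    then show "models M (atmost (p ^ N))" unfolding atmost_card using struct_iso_card[OF si] fin cardC by simp
  qed
  then have "scott_sentence_within (\<lambda>M. abelian_p_group p M \<and> has_length p M N) C (atmost (p ^ N))"
    unfolding scott_sentence_within_def using atmost_props by blast
  then show ?thesis using atmost_props by blast
qed


lemma build:
  assumes cM: "comm_group M" and fin: "finite (carrier M)" and SA: "subgroup DA M" and SK: "subgroup DK M"
    and AK: "DA \<subseteq> DK" and cu: "ceq Xo Qu U" and cv: "ceq Xo Qv V" and VU: "V \<subseteq> U"
  shows "\<exists>Cs :: nat \<Rightarrow> nat monoid. unif_computable_seq Xo Cs \<and> (\<forall>n. group (Cs n)) \<and>
    (\<forall>n. M\<lparr>carrier := (if n \<in> V then carrier M else if n \<in> U then DK else DA)\<rparr> \<cong> Cs n)"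
proof -
  have gM: "group M" using cM by (simp add: comm_group_def)
  obtain b and G :: "nat monoid" where b: "b \<in> iso M G" and cG: "carrier G = {0..<card (carrier M)}" and gG: "group G"
    using nat_copy[OF gM fin] by blast
  have sA: "subgroup (b ` DA) G" using subgroup.iso_subgroup[OF SA gM gG b] .
  have sK: "subgroup (b ` DK) G" using subgroup.iso_subgroup[OF SK gM gG b] .
  interpret S: seqc Xo G "card (carrier M)" "b ` DA" "b ` DK" Qu Qv U V
    by (rule seqc.intro[OF gG cG sA sK image_mono[OF AK] cu cv VU])
  have bc: "b ` carrier M = carrier G" using b by (simp add: iso_def bij_betw_def)
  define D where "D n = (if n \<in> V then carrier M else if n \<in> U then DK else DA)" for n
  have Dsub: "subgroup (D n) M" for n unfolding D_def using SA SK group.subgroup_self[OF gM] by auto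
  have DnD: "S.Dn n = b ` D n" for n unfolding S.Dn_def D_def using bc by auto
  have gDn: "group (G\<lparr>carrier := S.Dn n\<rparr>)" for n using subgroup.subgroup_is_group[OF S.Dn_sub gG] .
  have one: "S.code n \<one>\<^bsub>G\<^esub> = \<one>\<^bsub>G\<^esub>" for n
  proof -
    have "\<one>\<^bsub>G\<^esub> \<in> b ` DA" using subgroup.one_closed[OF sA] .
    then show ?thesis by (simp add: S.code_def S.tagn_def)
  qed
  have grp: "group (S.Cs n)" for n
  proof -
    have "group ((S.Cs n)\<lparr>one := S.code n \<one>\<^bsub>G\<lparr>carrier := S.Dn n\<rparr>\<^esub>\<rparr>)"
      by (rule group.iso_imp_img_group[OF gDn S.code_iso])
    moreover have "(S.Cs n)\<lparr>one := S.code n \<one>\<^bsub>G\<lparr>carrier := S.Dn n\<rparr>\<^esub>\<rparr> = S.Cs n"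
      using one by (simp add: S.Cs_def)
    ultimately show ?thesis by simp
  qed
  have "M\<lparr>carrier := D n\<rparr> \<cong> S.Cs n" for n
  proof -
    have "b \<in> iso (M\<lparr>carrier := D n\<rparr>) (G\<lparr>carrier := b ` D n\<rparr>)"
      by (rule restr_iso[OF b subgroup.subset[OF Dsub]])
    then have "M\<lparr>carrier := D n\<rparr> \<cong> G\<lparr>carrier := S.Dn n\<rparr>" unfolding is_iso_def DnD by blast
    moreover have "G\<lparr>carrier := S.Dn n\<rparr> \<cong> S.Cs n" using S.code_iso unfolding is_iso_def by blast
    ultimately show ?thesis by (rule iso_trans)
  qed
  then show ?thesis using S.ucs grp unfolding D_def by blast
qed


theorem lemma5p8:
  fixes p N :: nat and C :: "'a monoid"
  assumes "Factorial_Ring.prime p"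
    and "abelian_p_group p C" and "finite (carrier C)" and "carrier C \<noteq> {\<one>\<^bsub>C\<^esub>}"
    and "has_length p C N"
  shows "(C \<cong> integer_mod_group (p ^ N) \<longrightarrow>
            (\<exists>\<phi>. universal \<phi> \<and>
               scott_sentence_within (\<lambda>M. abelian_p_group p M \<and> has_length p M N) C \<phi>) \<and>
            (\<forall>Xo S. pi01_in Xo S \<longrightarrow>
               (\<exists>Cs :: nat \<Rightarrow> nat monoid. unif_computable_seq Xo Cs \<and>
                  (\<forall>n. abelian_p_group p (Cs n) \<and> has_length p (Cs n) N) \<and>
                  (\<forall>n. Cs n \<cong> C \<longleftrightarrow> n \<in> S))))
       \<and> (\<not> C \<cong> integer_mod_group (p ^ N) \<longrightarrow>
            (\<exists>\<phi>. dce_sentence \<phi> \<and> scott_sentence_within (\<lambda>M. True) C \<phi>) \<and>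
            (\<forall>Xo S. dce_in Xo S \<longrightarrow>
               (\<exists>Cs :: nat \<Rightarrow> nat monoid. unif_computable_seq Xo Cs \<and>
                  (\<forall>n. abelian_p_group p (Cs n) \<and> has_length p (Cs n) N) \<and>
                  (\<forall>n. Cs n \<cong> C \<longleftrightarrow> n \<in> S))))"
proof -
  note p = assms(1) and ap = assms(2) and fin = assms(3) and nt = assms(4) and hl = assms(5)
  have cC: "comm_group C" using ap by (simp add: abelian_p_group_def)
  have gC: "group C" using cC by (simp add: comm_group_def)
  have mC: "monoid C" using gC by (rule group.is_monoid)
  obtain g where N: "0 < N" and allC: "\<forall>x\<in>carrier C. x [^]\<^bsub>C\<^esub> (p ^ N) = \<one>\<^bsub>C\<^esub>"
    and g: "g \<in> carrier C" "g [^]\<^bsub>C\<^esub> (p ^ (N - 1)) \<noteq> \<one>\<^bsub>C\<^esub>"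
    using crit_conv[OF ap fin hl nt] by blast
  define M where "M = C \<times>\<times> C"
  have gM: "group M" unfolding M_def by (rule DirProd_group[OF gC gC])
  have cM: "comm_group M"
  proof (rule group.group_comm_groupI[OF gM])
    fix x y assume "x \<in> carrier M" "y \<in> carrier M"
    then show "x \<otimes>\<^bsub>M\<^esub> y = y \<otimes>\<^bsub>M\<^esub> x" unfolding M_def
      using comm_monoid.m_comm[of C] cC by (auto simp: mult_DirProd' comm_group_def)
  qed
  have finM: "finite (carrier M)" unfolding M_def using fin by simp
  have allM: "\<forall>x\<in>carrier M. x [^]\<^bsub>M\<^esub> (p ^ N) = \<one>\<^bsub>M\<^esub>"
    unfolding M_def using dp_pow[OF mC mC] allC by simp
  have g1: "(g, \<one>\<^bsub>C\<^esub>) [^]\<^bsub>M\<^esub> (p ^ (N - 1)) \<noteq> \<one>\<^bsub>M\<^esub>"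
    unfolding M_def using dp_pow[OF mC mC g(1) monoid.one_closed[OF mC]] g(2) by simp
  define DK where "DK = carrier C \<times> {\<one>\<^bsub>C\<^esub>}"
  have SK: "subgroup DK M" unfolding DK_def M_def
    by (rule DirProd_subgroups[OF gC group.subgroup_self[OF gC] gC group.triv_subgroup[OF gC]])
  have gK: "(g, \<one>\<^bsub>C\<^esub>) \<in> DK" using g(1) by (simp add: DK_def)
  have props: "abelian_p_group p Y \<and> has_length p Y N"
    if D: "subgroup D M" "(g, \<one>\<^bsub>C\<^esub>) \<in> D" and Y: "M\<lparr>carrier := D\<rparr> \<cong> Y" "group Y" for D and Y :: "nat monoid"
  proof -
    have a: "abelian_p_group p (M\<lparr>carrier := D\<rparr>)" "has_length p (M\<lparr>carrier := D\<rparr>) N"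
      using sub_ap_len[OF cM D(1) N allM D(2) g1] by blast+
    obtain h where h: "h \<in> iso (M\<lparr>carrier := D\<rparr>) Y" using Y(1) unfolding is_iso_def by blast
    have gD: "group (M\<lparr>carrier := D\<rparr>)" using subgroup.subgroup_is_group[OF D(1) gM] .
    show ?thesis using ap_iso[OF a(1) h Y(2)] hl_iso[OF h gD Y(2) a(2)] by blast
  qed
  have isoK: "M\<lparr>carrier := DK\<rparr> \<cong> C"
  proof -
    have "(\<lambda>x. (x, \<one>\<^bsub>C\<^esub>)) \<in> iso (C\<lparr>carrier := carrier C\<rparr>) (M\<lparr>carrier := DK\<rparr>)"
      unfolding M_def DK_def by (rule emb_iso[OF gC group.subgroup_self[OF gC]])
    then have "(\<lambda>x. (x, \<one>\<^bsub>C\<^esub>)) \<in> iso C (M\<lparr>carrier := DK\<rparr>)" by simp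
    then have "C \<cong> M\<lparr>carrier := DK\<rparr>" unfolding is_iso_def by blast
    then show ?thesis using group.iso_sym[OF gC] by blast
  qed
  have cardC2: "2 \<le> card (carrier C)"
  proof -
    obtain x where "x \<in> carrier C" "x \<noteq> \<one>\<^bsub>C\<^esub>" using nt monoid.one_closed[OF mC] by blast
    then have "{x, \<one>\<^bsub>C\<^esub>} \<subseteq> carrier C" using monoid.one_closed[OF mC] by simp
    then have "card {x, \<one>\<^bsub>C\<^esub>} \<le> card (carrier C)" using fin by (rule card_mono[rotated])
    then show ?thesis using \<open>x \<noteq> \<one>\<^bsub>C\<^esub>\<close> by simp
  qed
  have notM: "\<not> Y \<cong> C" if "M \<cong> Y" for Y :: "nat monoid"
  proof
    assume "Y \<cong> C"
    then have "M \<cong> C" using iso_trans[OF that] by blast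
    then obtain h where "h \<in> iso M C" unfolding is_iso_def by blast
    then have "card (carrier M) = card (carrier C)" by (auto simp: iso_def bij_betw_same_card)
    moreover have "card (carrier M) = card (carrier C) * card (carrier C)" unfolding M_def by (simp add: card_cartesian_product)
    moreover have "2 * card (carrier C) \<le> card (carrier C) * card (carrier C)"
      using cardC2 by (rule mult_le_mono1)
    ultimately show False using cardC2 by linarith
  qed
  have Mself: "M\<lparr>carrier := carrier M\<rparr> = M" by simp
  show ?thesis
  proof (intro conjI impI)
    assume cyc: "C \<cong> integer_mod_group (p ^ N)"
    show "\<exists>\<phi>. universal \<phi> \<and> scott_sentence_within (\<lambda>M. abelian_p_group p M \<and> has_length p M N) C \<phi>"
      by (rule scott1[OF p ap fin nt hl cyc])
    show "\<forall>Xo S. pi01_in Xo S \<longrightarrow> (\<exists>Cs :: nat \<Rightarrow> nat monoid. unif_computable_seq Xo Cs \<and>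
        (\<forall>n. abelian_p_group p (Cs n) \<and> has_length p (Cs n) N) \<and> (\<forall>n. Cs n \<cong> C \<longleftrightarrow> n \<in> S))"
    proof (intro allI impI)
      fix Xo S assume "pi01_in Xo S"
      then obtain Q where Q: "ceq Xo Q (- S)" using ce_nf unfolding pi01_in_def by blast
      obtain Cs :: "nat \<Rightarrow> nat monoid" where Cs: "unif_computable_seq Xo Cs" "\<forall>n. group (Cs n)"
        "\<forall>n. M\<lparr>carrier := (if n \<in> - S then carrier M else if n \<in> - S then DK else DK)\<rparr> \<cong> Cs n"
        using build[OF cM finM SK SK subset_refl Q Q subset_refl] by blast
      have "abelian_p_group p (Cs n) \<and> has_length p (Cs n) N" for n
      proof (cases "n \<in> S")
        case True
        then have "M\<lparr>carrier := DK\<rparr> \<cong> Cs n" using Cs(3)[rule_format, of n] by simp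
        then show ?thesis using props[OF SK gK] Cs(2) by blast
      next
        case False then show ?thesis
        proof -
          have "M\<lparr>carrier := carrier M\<rparr> \<cong> Cs n" using Cs(3)[rule_format, of n] False by simp
          moreover have "(g, \<one>\<^bsub>C\<^esub>) \<in> carrier M" using g(1) monoid.one_closed[OF mC] by (simp add: M_def)
          ultimately show ?thesis using props[OF group.subgroup_self[OF gM]] Cs(2) by blast
        qed
      qed
      moreover have "Cs n \<cong> C \<longleftrightarrow> n \<in> S" for n
      proof (cases "n \<in> S")
        case True
        then have "M\<lparr>carrier := DK\<rparr> \<cong> Cs n" using Cs(3)[rule_format, of n] by simp
        then have "Cs n \<cong> M\<lparr>carrier := DK\<rparr>" using group.iso_sym[OF subgroup.subgroup_is_group[OF SK gM]] by blast
        then show ?thesis using True iso_trans[OF _ isoK] by blast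
      next
        case False
        then have "M \<cong> Cs n" using Cs(3)[rule_format, of n] by simp
        then show ?thesis using False notM[of "Cs n"] by simp
      qed
      ultimately show "\<exists>Cs :: nat \<Rightarrow> nat monoid. unif_computable_seq Xo Cs \<and>
        (\<forall>n. abelian_p_group p (Cs n) \<and> has_length p (Cs n) N) \<and> (\<forall>n. Cs n \<cong> C \<longleftrightarrow> n \<in> S)"
        using Cs(1) by blast
    qed
  next
    assume ncyc: "\<not> C \<cong> integer_mod_group (p ^ N)"
    show "\<exists>\<phi>. dce_sentence \<phi> \<and> scott_sentence_within (\<lambda>M. True) C \<phi>"
      by (rule scott2[OF gC fin])
    show "\<forall>Xo S. dce_in Xo S \<longrightarrow> (\<exists>Cs :: nat \<Rightarrow> nat monoid. unif_computable_seq Xo Cs \<and>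
        (\<forall>n. abelian_p_group p (Cs n) \<and> has_length p (Cs n) N) \<and> (\<forall>n. Cs n \<cong> C \<longleftrightarrow> n \<in> S))"
    proof (intro allI impI)
      fix Xo S assume "dce_in Xo S"
      then obtain S1 S2 where S12: "ce_in Xo S1" "ce_in Xo S2" "S = S1 - S2" unfolding dce_in_def by blast
      obtain Q1 where Q1: "ceq Xo Q1 S1" using ce_nf[OF S12(1)] by blast
      obtain Q2 where Q2: "ceq Xo Q2 S2" using ce_nf[OF S12(2)] by blast
      have QU: "ceq Xo (\<lambda>n s. Q1 n s \<or> Q2 n s) (S1 \<union> S2)" by (rule ceq_un[OF Q1 Q2])
      have gN: "g [^]\<^bsub>C\<^esub> (p ^ N) = \<one>\<^bsub>C\<^esub>" using allC g(1) by blast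
      define H0 where "H0 = cpow C g ` carrier (integer_mod_group (p ^ N))"
      have H0s: "subgroup H0 C" and H0i: "cpow C g \<in> iso (integer_mod_group (p ^ N)) (C\<lparr>carrier := H0\<rparr>)"
        using cyc_iso[OF gC p N g(1) gN g(2)] unfolding H0_def by blast+
      have p1: "1 < p" using prime_gt_1_nat[OF p] .
      have "p \<le> p ^ N" using p1 N by (simp add: self_le_power)
      then have pN1: "p ^ N \<noteq> 1" using p1 by linarith
      have gH0: "g \<in> H0"
      proof -
        have "1 \<in> carrier (integer_mod_group (p ^ N))" using pN1 by simp
        moreover have "cpow C g 1 = g" unfolding cpow_def using pow1[OF mC g(1)] by simp
        ultimately show ?thesis unfolding H0_def by (metis image_eqI)
      qed
      define DA where "DA = H0 \<times> {\<one>\<^bsub>C\<^esub>}"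
      have SA: "subgroup DA M" unfolding DA_def M_def
        by (rule DirProd_subgroups[OF gC H0s gC group.triv_subgroup[OF gC]])
      have AK: "DA \<subseteq> DK" unfolding DA_def DK_def using subgroup.subset[OF H0s] by blast
      have gA: "(g, \<one>\<^bsub>C\<^esub>) \<in> DA" using gH0 by (simp add: DA_def)
      have isoA: "integer_mod_group (p ^ N) \<cong> M\<lparr>carrier := DA\<rparr>"
      proof -
        have "(\<lambda>x. (x, \<one>\<^bsub>C\<^esub>)) \<in> iso (C\<lparr>carrier := H0\<rparr>) (M\<lparr>carrier := DA\<rparr>)"
          unfolding M_def DA_def by (rule emb_iso[OF gC H0s])
        then have "C\<lparr>carrier := H0\<rparr> \<cong> M\<lparr>carrier := DA\<rparr>" unfolding is_iso_def by blast
        moreover have "integer_mod_group (p ^ N) \<cong> C\<lparr>carrier := H0\<rparr>" using H0i unfolding is_iso_def by blast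
        ultimately show ?thesis by (meson iso_trans)
      qed
      obtain Cs :: "nat \<Rightarrow> nat monoid" where Cs: "unif_computable_seq Xo Cs" "\<forall>n. group (Cs n)"
        "\<forall>n. M\<lparr>carrier := (if n \<in> S2 then carrier M else if n \<in> S1 \<union> S2 then DK else DA)\<rparr> \<cong> Cs n"
        using build[OF cM finM SA SK AK QU Q2] by blast
      have "abelian_p_group p (Cs n) \<and> has_length p (Cs n) N" for n
      proof -
        consider (a) "n \<in> S2" | (b) "n \<notin> S2" "n \<in> S1 \<union> S2" | (c) "n \<notin> S1 \<union> S2" by blast
        then show ?thesis
        proof cases
          case a then show ?thesis
          proof -
            have "M\<lparr>carrier := carrier M\<rparr> \<cong> Cs n" using Cs(3)[rule_format, of n] a by simp
            moreover have "(g, \<one>\<^bsub>C\<^esub>) \<in> carrier M" using g(1) monoid.one_closed[OF mC] by (simp add: M_def)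
            ultimately show ?thesis using props[OF group.subgroup_self[OF gM]] Cs(2) by blast
          qed
        next
          case b
          then have "M\<lparr>carrier := DK\<rparr> \<cong> Cs n" using Cs(3)[rule_format, of n] by simp
          then show ?thesis using props[OF SK gK] Cs(2) by blast
        next
          case c
          then have "M\<lparr>carrier := DA\<rparr> \<cong> Cs n" using Cs(3)[rule_format, of n] by simp
          then show ?thesis using props[OF SA gA] Cs(2) by blast
        qed
      qed
      moreover have "Cs n \<cong> C \<longleftrightarrow> n \<in> S" for n
      proof -
        consider (a) "n \<in> S2" | (b) "n \<notin> S2" "n \<in> S1 \<union> S2" | (c) "n \<notin> S1 \<union> S2" by blast
        then show ?thesis
        proof cases
          case a
          then have "M \<cong> Cs n" using Cs(3)[rule_format, of n] by simp
          then show ?thesis using a notM[of "Cs n"] S12(3) by simp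
        next
          case b
          then have "M\<lparr>carrier := DK\<rparr> \<cong> Cs n" using Cs(3)[rule_format, of n] by simp
          then have "Cs n \<cong> M\<lparr>carrier := DK\<rparr>" using group.iso_sym[OF subgroup.subgroup_is_group[OF SK gM]] by blast
          then have "Cs n \<cong> C" using iso_trans[OF _ isoK] by blast
          then show ?thesis using b S12(3) by simp
        next
          case c
          then have mc: "M\<lparr>carrier := DA\<rparr> \<cong> Cs n" using Cs(3)[rule_format, of n] by simp
          have "\<not> Cs n \<cong> C"
          proof
            assume "Cs n \<cong> C"
            then have "integer_mod_group (p ^ N) \<cong> C" using iso_trans[OF iso_trans[OF isoA mc]] by blast
            then show False using ncyc group.iso_sym[OF group_integer_mod_group] by blast
          qed
          then show ?thesis using c S12(3) by simp
        qed
      qed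
      ultimately show "\<exists>Cs :: nat \<Rightarrow> nat monoid. unif_computable_seq Xo Cs \<and>
        (\<forall>n. abelian_p_group p (Cs n) \<and> has_length p (Cs n) N) \<and> (\<forall>n. Cs n \<cong> C \<longleftrightarrow> n \<in> S)"
        using Cs(1) by blast
    qed
  qed
qed


end
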